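(* In the deterministic 4-user relay network described in the context (uplink gains $n_{tR}\geq n_{uR}\geq n_{vR}\geq n_{wR}$, downlink gains $n_{Ra}\geq n_{Rb}\geq n_{Rc}\geq n_{Rd}$, $\{t,u,v,w\}=\{a,b,c,d\}=\{1,2,3,4\}$), let $n^*=\min(n_{tR},n_{Ra})$ and, for distinct $p,q,r$, $\Phi(p,q,r)=\max\{R_{pq}+R_{pr}+\max(R_{qr},R_{rq}),\ R_{qp}+R_{qr}+\max(R_{pr},R_{rp}),\ R_{rp}+R_{rq}+\max(R_{pq},R_{qp})\}$ and $\Psi(p,q,r)=\max\{R_{qp}+R_{rp}+\max(R_{qr},R_{rq}),\ R_{pq}+R_{rq}+\max(R_{pr},R_{rp}),\ R_{pr}+R_{qr}+\max(R_{pq},R_{qp})\}$. Then the Simple Ordering Scheme (SOS) achieves every nonnegative integer rate tuple $(R_{ij})_{i\neq j\in\{1,2,3,4\}}$ that satisfies all of the inequalities $R_{wt}+R_{wu}+R_{wv}\leq n_{wR}$; $R_{ad}+R_{bd}+R_{cd}\leq n_{Rd}$; $R_{wt}+R_{wu}+R_{vt}+R_{vu}+\max(R_{vw},R_{wv})\leq n_{vR}$; $R_{ad}+R_{bd}+R_{ac}+R_{bc}+\max(R_{cd},R_{dc})\leq n_{Rc}$; $R_{ut}+R_{vt}+R_{wt}+\Phi(u,v,w)\leq n_{uR}$; $R_{tu}+R_{tv}+R_{tw}+\Phi(u,v,w)\leq n_{tR}$; $R_{ut}+R_{uv}+R_{uw}+\Phi(t,v,w)\leq n_{tR}$; $R_{vt}+R_{vu}+R_{vw}+\Phi(t,u,w)\leq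 n_{tR}$; $R_{wt}+R_{wu}+R_{wv}+\Phi(t,u,v)\leq n_{tR}$; $R_{ab}+R_{ac}+R_{ad}+\Psi(b,c,d)\leq n_{Rb}$; $R_{ba}+R_{ca}+R_{da}+\Psi(b,c,d)\leq n_{Ra}$; $R_{ab}+R_{cb}+R_{db}+\Psi(a,c,d)\leq n_{Ra}$; $R_{ac}+R_{bc}+R_{dc}+\Psi(a,b,d)\leq n_{Ra}$; $R_{ad}+R_{bd}+R_{cd}+\Psi(a,b,c)\leq n_{Ra}$, and in addition the extra conditions (E1) $\max\{R_{wu}+R_{uv}+R_{vw},\ R_{uw}+R_{wv}+R_{vu}\}+R_{wt}+R_{ut}+R_{vt}\leq n_{uR}$; (E2) $\max\{R_{bc}+R_{cd}+R_{db},\ R_{cb}+R_{bd}+R_{dc}\}+R_{ab}+R_{ac}+R_{ad}\leq n_{Rb}$; (E3) $R_{ij}+R_{jk}+R_{ki}+\max\{R_{li}+R_{lj}+R_{lk},\ R_{il}+R_{jl}+R_{kl}\}\leq n^*$ for every ordering $(i,j,k,l)$ of $\{1,2,3,4\}$; (E4) $R_{ij}+R_{jk}+R_{kl}+R_{li}+\max(R_{jl},R_{lj})+\max(R_{ik},R_{ki})\leq n^*$ for every ordering $(i,j,k,l)$ of $\{1,2,3,4\}$.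
   Context: Network: four users $1,2,3,4$ and a relay with no messages of its own; users have no direct links and communicate only through the relay. User $i$ sends to user $j$ at rate $R_{ij}$ bits per channel use. Linear deterministic model (Avestimehr–Diggavi–Tse) with non-reciprocal nonnegative integer gains: $n_{iR}$ from user $i$ to the relay, $n_{Ri}$ from the relay to user $i$; with $S$ the $q\times q$ down-shift matrix over $\mathbb{F}_2$, the relay receives $\sum_i S^{q-n_{iR}}x_i$ over $\mathbb{F}_2$ (so user $i$ reaches only the top $n_{iR}$ received levels) and user $i$ receives $S^{q-n_{Ri}}x_R$ (only the top $n_{Ri}$ relay levels). Simple Ordering Scheme (SOS): in the uplink, each user sends its message bits uncoded on distinct signal levels, ordered so that for each pair of users $i,j$, $\min(R_{ij},R_{ji})$ bits of the message $i\to j$ and the same number of bits of the message $j\to i$ arrive at the relay on the same received levels (so the relay observes their XORs), all other bits arriving on levels not shared with other bits. The relay does not decode individual bits; it reorders the received equations (XORed pairs or single bits) into four segments and broadcasts them: the segment for user $d$ (lowest downlink levels) consists of, for each $k\in\{a,b,c\}$, $\min(R_{dk},R_{kd})$ XORs of bits of $R_{dk}$ and $R_{kd}$, followed by the remaining $\max(R_{dk},R_{kd})-\min(R_{dk},R_{kd})$ single bits of $R_{kd}$ if $R_{kd}>R_{dk}$; the segments for $c$, $b$, $a$ (in increasing level order) are built in the same way from the bits not already included in lower segments. Each user decodes its intended bits from the levels it receives, using its own transmitted bits to strip XORs. The uplink levels are organized analogously into segments for users $w,v,u,t$. "Achieves" means that all messages are correctly decoded at rates $R_{ij}$. *)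

theory Defs
  imports Main
begin

text \<open>Users 1..4. A message bit is a triple (i,j,k): the k-th bit of the message i to j.
 Signal vectors in F_2^q are functions nat => bool (indices 0..q-1, index 0 = top).\<close>

definition Users :: "nat set" where "Users = {1,2,3,4}"

definition Bits :: "(nat \<Rightarrow> nat \<Rightarrow> nat) \<Rightarrow> (nat \<times> nat \<times> nat) set" where
  "Bits R = {(i,j,k). i \<in> Users \<and> j \<in> Users \<and> i \<noteq> j \<and> k < R i j}"

definition src :: "nat \<times> nat \<times> nat \<Rightarrow> nat" where "src x = fst x"
definition dst :: "nat \<times> nat \<times> nat \<Rightarrow> nat" where "dst x = fst (snd x)"

definition shiftS :: "nat \<Rightarrow> (nat \<Rightarrow> bool) \<Rightarrow> nat \<Rightarrow> bool" where
  "shiftS s x k = (s \<le> k \<and> x (k - s))"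

text \<open>Uplink: pos x is the position (signal level) of x_i on which user src x sends bit x, uncoded.\<close>
definition user_tx :: "(nat \<Rightarrow> nat \<Rightarrow> nat) \<Rightarrow> (nat\<times>nat\<times>nat \<Rightarrow> nat) \<Rightarrow> (nat\<times>nat\<times>nat \<Rightarrow> bool)
    \<Rightarrow> nat \<Rightarrow> nat \<Rightarrow> bool" where
  "user_tx R pos m i p = (\<exists>x\<in>Bits R. src x = i \<and> pos x = p \<and> m x)"

text \<open>Relay reception: y_R = sum_i S^(q - n_iR) x_i over F_2 (component l).\<close>
definition relay_rx :: "nat \<Rightarrow> (nat \<Rightarrow> nat) \<Rightarrow> (nat \<Rightarrow> nat \<Rightarrow> nat) \<Rightarrow> (nat\<times>nat\<times>nat \<Rightarrow> nat)
    \<Rightarrow> (nat\<times>nat\<times>nat \<Rightarrow> bool) \<Rightarrow> nat \<Rightarrow> bool" where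
  "relay_rx q nup R pos m l =
     (l < q \<and> odd (card {i \<in> Users. shiftS (q - nup i) (user_tx R pos m i) l}))"

definition rl :: "nat \<Rightarrow> (nat \<Rightarrow> nat) \<Rightarrow> (nat\<times>nat\<times>nat \<Rightarrow> nat) \<Rightarrow> nat\<times>nat\<times>nat \<Rightarrow> nat" where
  "rl q nup pos x = pos x + (q - nup (src x))"

definition Levels :: "nat \<Rightarrow> (nat \<Rightarrow> nat) \<Rightarrow> (nat \<Rightarrow> nat \<Rightarrow> nat) \<Rightarrow> (nat\<times>nat\<times>nat \<Rightarrow> nat) \<Rightarrow> nat set" where
  "Levels q nup R pos = rl q nup pos ` Bits R"

definition rank4 :: "nat \<Rightarrow> nat \<Rightarrow> nat \<Rightarrow> nat \<Rightarrow> nat \<Rightarrow> nat" where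
  "rank4 s1 s2 s3 s4 x = (if x = s4 then 0 else if x = s3 then 1 else if x = s2 then 2 else 3)"

text \<open>Uplink segment of an equation: single bit i->j belongs to sender i's segment,
  XOR of i->j and j->i bits to the segment of the weaker (lower-ranked) user.\<close>
definition ukey :: "nat \<Rightarrow> (nat \<Rightarrow> nat) \<Rightarrow> (nat \<Rightarrow> nat \<Rightarrow> nat) \<Rightarrow> (nat\<times>nat\<times>nat \<Rightarrow> nat)
    \<Rightarrow> (nat \<Rightarrow> nat) \<Rightarrow> nat \<Rightarrow> nat" where
  "ukey q nup R pos urk l = Min {urk (src x) | x. x \<in> Bits R \<and> rl q nup pos x = l}"

text \<open>Downlink segment: single bit i->j belongs to receiver j's segment,
  XOR of i->j and j->i bits to the segment of the weaker (lower-ranked) user.\<close>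
definition dkey :: "nat \<Rightarrow> (nat \<Rightarrow> nat) \<Rightarrow> (nat \<Rightarrow> nat \<Rightarrow> nat) \<Rightarrow> (nat\<times>nat\<times>nat \<Rightarrow> nat)
    \<Rightarrow> (nat \<Rightarrow> nat) \<Rightarrow> nat \<Rightarrow> nat" where
  "dkey q nup R pos drk l = Min {drk (dst x) | x. x \<in> Bits R \<and> rl q nup pos x = l}"

text \<open>Structural requirements of the Simple Ordering Scheme.
  pos: uplink level assignment; tp: relay maps received level l to transmit level tp l.\<close>
definition sos_scheme :: "nat \<Rightarrow> (nat \<Rightarrow> nat) \<Rightarrow> (nat \<Rightarrow> nat \<Rightarrow> nat) \<Rightarrow> (nat \<Rightarrow> nat) \<Rightarrow> (nat \<Rightarrow> nat)
    \<Rightarrow> (nat\<times>nat\<times>nat \<Rightarrow> nat) \<Rightarrow> (nat \<Rightarrow> nat) \<Rightarrow> bool" where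
  "sos_scheme q nup R urk drk pos tp =
    ((\<forall>x\<in>Bits R. pos x < nup (src x)) \<comment> \<open>every bit arrives at the relay\<close>
     \<and> (\<forall>x\<in>Bits R. \<forall>y\<in>Bits R. x \<noteq> y \<and> rl q nup pos x = rl q nup pos y
            \<longrightarrow> src x = dst y \<and> dst x = src y) \<comment> \<open>only opposite bits share levels\<close>
     \<and> (\<forall>i\<in>Users. \<forall>j\<in>Users. i \<noteq> j \<longrightarrow>
          card {l. \<exists>k k'. k < R i j \<and> k' < R j i \<and> rl q nup pos (i,j,k) = l
                          \<and> rl q nup pos (j,i,k') = l} = min (R i j) (R j i))
     \<comment> \<open>uplink segments w,v,u,t occupy contiguous levels, lowest = reachable by all\<close>
     \<and> (\<lambda>l. q - 1 - l) ` Levels q nup R pos = {0..<card (Levels q nup R pos)}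
     \<and> (\<forall>l\<in>Levels q nup R pos. \<forall>l'\<in>Levels q nup R pos.
          ukey q nup R pos urk l < ukey q nup R pos urk l' \<longrightarrow> q - 1 - l < q - 1 - l')
     \<comment> \<open>relay reorders equations into downlink segments d,c,b,a\<close>
     \<and> inj_on tp (Levels q nup R pos)
     \<and> tp ` Levels q nup R pos = {0..<card (Levels q nup R pos)}
     \<and> (\<forall>l\<in>Levels q nup R pos. \<forall>l'\<in>Levels q nup R pos.
          dkey q nup R pos drk l < dkey q nup R pos drk l' \<longrightarrow> tp l < tp l'))"

text \<open>Relay transmit signal x_R and reception y_j = S^(q - n_Rj) x_R.\<close>
definition relay_tx :: "nat \<Rightarrow> (nat \<Rightarrow> nat) \<Rightarrow> (nat \<Rightarrow> nat \<Rightarrow> nat) \<Rightarrow> (nat\<times>nat\<times>nat \<Rightarrow> nat)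
    \<Rightarrow> (nat \<Rightarrow> nat) \<Rightarrow> (nat\<times>nat\<times>nat \<Rightarrow> bool) \<Rightarrow> nat \<Rightarrow> bool" where
  "relay_tx q nup R pos tp m p =
     (\<exists>l\<in>Levels q nup R pos. tp l = p \<and> relay_rx q nup R pos m l)"

definition user_rx :: "nat \<Rightarrow> (nat \<Rightarrow> nat) \<Rightarrow> (nat \<Rightarrow> nat) \<Rightarrow> (nat \<Rightarrow> nat \<Rightarrow> nat) \<Rightarrow> (nat\<times>nat\<times>nat \<Rightarrow> nat)
    \<Rightarrow> (nat \<Rightarrow> nat) \<Rightarrow> (nat\<times>nat\<times>nat \<Rightarrow> bool) \<Rightarrow> nat \<Rightarrow> nat \<Rightarrow> bool" where
  "user_rx q nup ndn R pos tp m j k =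
     (k < q \<and> shiftS (q - ndn j) (relay_tx q nup R pos tp m) k)"

text \<open>SOS decoding of bit x at its receiver j: read the level carrying its equation,
  and strip the XOR with j's own bit on that equation (if any).\<close>
definition sos_decode :: "nat \<Rightarrow> (nat \<Rightarrow> nat) \<Rightarrow> (nat \<Rightarrow> nat) \<Rightarrow> (nat \<Rightarrow> nat \<Rightarrow> nat) \<Rightarrow> (nat\<times>nat\<times>nat \<Rightarrow> nat)
    \<Rightarrow> (nat \<Rightarrow> nat) \<Rightarrow> (nat\<times>nat\<times>nat \<Rightarrow> bool) \<Rightarrow> nat\<times>nat\<times>nat \<Rightarrow> bool" where
  "sos_decode q nup ndn R pos tp m x =
     (let j = dst x; l = rl q nup pos x in
       user_rx q nup ndn R pos tp m j (tp l + (q - ndn j))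
       \<noteq> (\<exists>y\<in>Bits R. src y = j \<and> rl q nup pos y = l \<and> m y))"

definition SOS_achieves :: "nat \<Rightarrow> (nat \<Rightarrow> nat) \<Rightarrow> (nat \<Rightarrow> nat) \<Rightarrow> (nat \<Rightarrow> nat \<Rightarrow> nat)
    \<Rightarrow> nat \<Rightarrow> nat \<Rightarrow> nat \<Rightarrow> nat \<Rightarrow> nat \<Rightarrow> nat \<Rightarrow> nat \<Rightarrow> nat \<Rightarrow> bool" where
  "SOS_achieves q nup ndn R t u v w a b c d =
     (\<exists>pos tp. sos_scheme q nup R (rank4 t u v w) (rank4 a b c d) pos tp
        \<and> (\<forall>m. \<forall>x\<in>Bits R. sos_decode q nup ndn R pos tp m x = m x))"

definition Phi :: "(nat \<Rightarrow> nat \<Rightarrow> nat) \<Rightarrow> nat \<Rightarrow> nat \<Rightarrow> nat \<Rightarrow> nat" where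
  "Phi R p s r = Max {R p s + R p r + max (R s r) (R r s),
                      R s p + R s r + max (R p r) (R r p),
                      R r p + R r s + max (R p s) (R s p)}"

definition Psi :: "(nat \<Rightarrow> nat \<Rightarrow> nat) \<Rightarrow> nat \<Rightarrow> nat \<Rightarrow> nat \<Rightarrow> nat" where
  "Psi R p s r = Max {R s p + R r p + max (R s r) (R r s),
                      R p s + R r s + max (R p r) (R r p),
                      R p r + R s r + max (R p s) (R s p)}"

end

theory Submission
  imports Defs "HOL-Library.Product_Lexorder"
begin


lemma rank_bij:
  fixes E :: "'a::linorder set" and \<kappa> :: "'a \<Rightarrow> nat"
  assumes fin: "finite E"
  shows "\<exists>f. bij_betw f E {0..<card E} \<and> (\<forall>e\<in>E. \<forall>e'\<in>E. \<kappa> e < \<kappa> e' \<longrightarrow> f e < f e')"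
proof -
  define lt where "lt e e' \<longleftrightarrow> \<kappa> e < \<kappa> e' \<or> (\<kappa> e = \<kappa> e' \<and> e < e')" for e e'
  define f where "f e = card {x\<in>E. lt x e}" for e
  have trans: "lt a b \<Longrightarrow> lt b c \<Longrightarrow> lt a c" for a b c
    unfolding lt_def by auto
  have irr: "\<not> lt a a" for a unfolding lt_def by auto
  have tot: "a \<noteq> b \<Longrightarrow> lt a b \<or> lt b a" for a b unfolding lt_def by auto
  have mono: "f a < f b" if "a \<in> E" "b \<in> E" "lt a b" for a b
  proof -
    have "{x\<in>E. lt x a} \<subset> {x\<in>E. lt x b}"
      using that trans irr by blast
    moreover have "finite {x\<in>E. lt x b}" using fin by simp
    ultimately show ?thesis unfolding f_def by (simp add: psubset_card_mono)
  qed
  have inj: "inj_on f E"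
  proof (rule inj_onI)
    fix a b assume ab: "a \<in> E" "b \<in> E" "f a = f b"
    show "a = b"
    proof (rule ccontr)
      assume "a \<noteq> b"
      then have "lt a b \<or> lt b a" by (rule tot)
      then show False using mono[OF ab(1,2)] mono[OF ab(2,1)] ab(3) by auto
    qed
  qed
  have lt_card: "f e < card E" if "e \<in> E" for e
  proof -
    have "{x\<in>E. lt x e} \<subset> E" using that irr by blast
    then show ?thesis unfolding f_def using fin psubset_card_mono by blast
  qed
  have sub: "f ` E \<subseteq> {0..<card E}" using lt_card by auto
  have "card (f ` E) = card {0..<card E}" using card_image[OF inj] by simp
  then have "f ` E = {0..<card E}" using sub by (simp add: card_subset_eq)
  then have "bij_betw f E {0..<card E}" using inj by (simp add: bij_betw_def)
  moreover have "\<forall>e\<in>E. \<forall>e'\<in>E. \<kappa> e < \<kappa> e' \<longrightarrow> f e < f e'"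
    using mono unfolding lt_def by blast
  ultimately show ?thesis by blast
qed

lemma rank_deadline:
  fixes \<kappa> :: "'a \<Rightarrow> nat"
  assumes fin: "finite E" and bij: "bij_betw f E {0..<card E}"
    and mono: "\<forall>e\<in>E. \<forall>e'\<in>E. \<kappa> e < \<kappa> e' \<longrightarrow> f e < f e'" and eE: "e \<in> E"
  shows "f e < card {e'\<in>E. \<kappa> e' \<le> \<kappa> e}"
proof -
  define A where "A = {e'\<in>E. f e' \<le> f e}"
  have AK: "A \<subseteq> {e'\<in>E. \<kappa> e' \<le> \<kappa> e}"
    proof
    fix x assume "x \<in> A"
    then have x: "x \<in> E" "f x \<le> f e" by (auto simp: A_def)
    have "\<kappa> x \<le> \<kappa> e"
    proof (rule ccontr)
      assume "\<not> \<kappa> x \<le> \<kappa> e"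
      then have "f e < f x" using mono eE x(1) by auto
      then show False using x(2) by simp
    qed
    then show "x \<in> {e'\<in>E. \<kappa> e' \<le> \<kappa> e}" using x by simp
  qed
  have inj: "inj_on f A" using bij unfolding A_def bij_betw_def by (auto intro: inj_on_subset)
  have img: "f ` A = {0..f e}"
  proof
    show "f ` A \<subseteq> {0..f e}" unfolding A_def by auto
    show "{0..f e} \<subseteq> f ` A"
    proof
      fix n assume n: "n \<in> {0..f e}"
      have "f e < card E" using bij eE by (auto simp: bij_betw_def)
      then have "n \<in> f ` E" using n bij by (auto simp: bij_betw_def)
      then show "n \<in> f ` A" using n unfolding A_def by auto
    qed
  qed
  have "card A = f e + 1" using card_image[OF inj] img by simp
  moreover have "card A \<le> card {e'\<in>E. \<kappa> e' \<le> \<kappa> e}"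
    using AK fin by (intro card_mono) auto
  ultimately show ?thesis by simp
qed



definition EQ :: "(nat \<Rightarrow> nat \<Rightarrow> nat) \<Rightarrow> (nat\<times>nat\<times>nat) set" where
 "EQ R = {(i,j,k). i\<in>Users \<and> j\<in>Users \<and> i<j \<and> k < max (R i j) (R j i)}"

definition eqof :: "nat\<times>nat\<times>nat \<Rightarrow> nat\<times>nat\<times>nat" where
 "eqof x = (min (src x) (dst x), max (src x) (dst x), snd (snd x))"

definition key :: "(nat \<Rightarrow> nat \<Rightarrow> nat) \<Rightarrow> (nat \<Rightarrow> nat \<Rightarrow> nat) \<Rightarrow> nat\<times>nat\<times>nat \<Rightarrow> nat" where
 "key R H e = Min ((\<lambda>x. H (src x) (dst x)) ` {x\<in>Bits R. eqof x = e})"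

lemma finite_Users: "finite Users" by (simp add: Users_def)

lemma finite_Bits: "finite (Bits R)"
proof -
  have "Bits R \<subseteq> Users \<times> Users \<times> {..<Max {R i j | i j. i\<in>Users \<and> j\<in>Users}}"
  proof
    fix x assume "x \<in> Bits R"
    then obtain i j k where x: "x = (i,j,k)" "i\<in>Users" "j\<in>Users" "k < R i j" by (auto simp: Bits_def)
    have fin: "finite {R i j | i j. i\<in>Users \<and> j\<in>Users}"
      using finite_Users by (simp add: finite_image_set2)
    have "R i j \<le> Max {R i j | i j. i\<in>Users \<and> j\<in>Users}"
      using x fin by (intro Max_ge) auto
    then show "x \<in> Users \<times> Users \<times> {..<Max {R i j | i j. i\<in>Users \<and> j\<in>Users}}"
      using x by auto
  qed
  moreover have "finite (Users \<times> Users \<times> {..<Max {R i j | i j. i\<in>Users \<and> j\<in>Users}})"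
    using finite_Users by auto
  ultimately show ?thesis by (rule finite_subset)
qed

lemma finite_EQ: "finite (EQ R)"
proof -
  have "EQ R \<subseteq> Users \<times> Users \<times> {..<Max {max (R i j) (R j i) | i j. i\<in>Users \<and> j\<in>Users}}"
  proof
    fix x assume "x \<in> EQ R"
    then obtain i j k where x: "x = (i,j,k)" "i\<in>Users" "j\<in>Users" "k < max (R i j) (R j i)" by (auto simp: EQ_def)
    have fin: "finite {max (R i j) (R j i) | i j. i\<in>Users \<and> j\<in>Users}"
      using finite_Users by (simp add: finite_image_set2)
    have "max (R i j) (R j i) \<le> Max {max (R i j) (R j i) | i j. i\<in>Users \<and> j\<in>Users}"
      using x fin by (intro Max_ge) auto
    then show "x \<in> Users \<times> Users \<times> {..<Max {max (R i j) (R j i) | i j. i\<in>Users \<and> j\<in>Users}}"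
      using x by auto
  qed
  moreover have "finite (Users \<times> Users \<times> {..<Max {max (R i j) (R j i) | i j. i\<in>Users \<and> j\<in>Users}})"
    using finite_Users by auto
  ultimately show ?thesis by (rule finite_subset)
qed

lemma eqof_Bits: "eqof ` Bits R = EQ R"
proof
  show "eqof ` Bits R \<subseteq> EQ R"
  proof
    fix e assume "e \<in> eqof ` Bits R"
    then obtain i j k where b: "(i,j,k) \<in> Bits R" and e: "e = eqof (i,j,k)" by auto
    from b have "i \<in> Users" "j \<in> Users" "i \<noteq> j" "k < R i j" by (auto simp: Bits_def)
    then show "e \<in> EQ R" unfolding e eqof_def EQ_def src_def dst_def
      by (cases "i < j") (auto simp: max_def min_def)
  qed
  show "EQ R \<subseteq> eqof ` Bits R"
  proof
    fix e assume "e \<in> EQ R"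
    then obtain i j k where e: "e = (i,j,k)" "i\<in>Users" "j\<in>Users" "i<j" "k < max (R i j) (R j i)"
      by (auto simp: EQ_def)
    show "e \<in> eqof ` Bits R"
    proof (cases "k < R i j")
      case True
      then have "(i,j,k) \<in> Bits R" using e by (auto simp: Bits_def)
      moreover have "eqof (i,j,k) = e" using e by (simp add: eqof_def src_def dst_def)
      ultimately show ?thesis by (metis image_eqI)
    next
      case False
      then have "k < R j i" using e by simp
      then have "(j,i,k) \<in> Bits R" using e by (auto simp: Bits_def)
      moreover have "eqof (j,i,k) = e" using e by (simp add: eqof_def src_def dst_def)
      ultimately show ?thesis by (metis image_eqI)
    qed
  qed
qed

lemma bits_of_eq:
  assumes "(i,j,k) \<in> EQ R"
  shows "{x\<in>Bits R. eqof x = (i,j,k)} = {x. (x = (i,j,k) \<and> k < R i j) \<or> (x = (j,i,k) \<and> k < R j i)}"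
proof -
  have ij: "i \<in> Users" "j \<in> Users" "i < j" using assms by (auto simp: EQ_def)
  show ?thesis
  proof (intro set_eqI iffI)
    fix x assume "x \<in> {x\<in>Bits R. eqof x = (i,j,k)}"
    then obtain a b c where x: "x = (a,b,c)" "a \<noteq> b" "c < R a b" "min a b = i" "max a b = j" "c = k"
      by (cases x) (auto simp: Bits_def eqof_def src_def dst_def)
    show "x \<in> {x. (x = (i,j,k) \<and> k < R i j) \<or> (x = (j,i,k) \<and> k < R j i)}"
    proof (cases "a < b")
      case True then show ?thesis using x by (simp add: min_def max_def)
    next
      case False then show ?thesis using x by (simp add: min_def max_def)
    qed
  next
    fix x assume "x \<in> {x. (x = (i,j,k) \<and> k < R i j) \<or> (x = (j,i,k) \<and> k < R j i)}"
    then show "x \<in> {x\<in>Bits R. eqof x = (i,j,k)}" using ij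
      by (auto simp: Bits_def eqof_def src_def dst_def min_def max_def)
  qed
qed

lemma key_le_iff:
  assumes "(i,j,k) \<in> EQ R"
  shows "key R H (i,j,k) \<le> r \<longleftrightarrow> (k < R i j \<and> H i j \<le> r) \<or> (k < R j i \<and> H j i \<le> r)"
proof -
  have "(i,j,k) \<in> eqof ` Bits R" using assms eqof_Bits by simp
  then obtain y where "y \<in> Bits R" "eqof y = (i,j,k)" by (rule imageE) simp
  then have yin: "y \<in> {x\<in>Bits R. eqof x = (i,j,k)}" by simp
  then have ne: "{x\<in>Bits R. eqof x = (i,j,k)} \<noteq> {}" by (metis empty_iff)
  have fin: "finite {x\<in>Bits R. eqof x = (i,j,k)}" using finite_Bits by simp
  have "key R H (i,j,k) \<le> r \<longleftrightarrow> (\<exists>x\<in>{x\<in>Bits R. eqof x = (i,j,k)}. H (src x) (dst x) \<le> r)"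
    unfolding key_def using ne fin by (simp add: Min_le_iff)
  also have "\<dots> \<longleftrightarrow> (k < R i j \<and> H i j \<le> r) \<or> (k < R j i \<and> H j i \<le> r)"
    unfolding bits_of_eq[OF assms] by (auto simp: src_def dst_def)
  finally show ?thesis .
qed

lemma key_le_bit:
  assumes "x \<in> Bits R"
  shows "key R H (eqof x) \<le> H (src x) (dst x)"
proof -
  have "H (src x) (dst x) \<in> (\<lambda>x. H (src x) (dst x)) ` {y\<in>Bits R. eqof y = eqof x}"
    using assms by (intro imageI) simp
  moreover have "finite ((\<lambda>x. H (src x) (dst x)) ` {y\<in>Bits R. eqof y = eqof x})"
    using finite_Bits[of R] by simp
  ultimately show ?thesis unfolding key_def by (rule Min_le[rotated])
qed

lemma card_tri:
  fixes g :: "nat \<Rightarrow> nat \<Rightarrow> nat"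
  shows "card {(i,j,k). i\<in>Users \<and> j\<in>Users \<and> i<j \<and> k < g i j} = g 1 2 + g 1 3 + g 1 4 + g 2 3 + g 2 4 + g 3 4"
proof -
  have "{(i,j,k). i\<in>Users \<and> j\<in>Users \<and> i<j \<and> k < g i j} = Sigma Users (\<lambda>i. Sigma {j\<in>Users. i<j} (\<lambda>j. {..<g i j}))"
    by (auto simp del: Sigma_def)
  also have "card \<dots> = (\<Sum>i\<in>Users. \<Sum>j\<in>{j\<in>Users. i<j}. g i j)"
    using finite_Users by (simp add: card_SigmaI)
  also have "\<dots> = g 1 2 + g 1 3 + g 1 4 + g 2 3 + g 2 4 + g 3 4"
  proof -
    have a: "{j\<in>Users. 1<j} = {2,3,4::nat}" "{j\<in>Users. 2<j} = {3,4::nat}" "{j\<in>Users. 3<j} = {4::nat}"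
      "{j\<in>Users. 4<j} = ({}::nat set)" by (auto simp: Users_def)
    have o: "(\<Sum>i\<in>Users. f i) = f 1 + f 2 + f 3 + f 4" for f :: "nat \<Rightarrow> nat"
      by (simp add: Users_def)
    show ?thesis unfolding o a by simp
  qed
  finally show ?thesis .
qed

lemma perm4:
  assumes "{t,u,v,w} = {1,2,3,4::nat}"
  shows "t \<in> {1,2,3,4} \<and> u \<in> {1,2,3,4} \<and> v \<in> {1,2,3,4} \<and> w \<in> {1,2,3,4} \<and>
         t \<noteq> u \<and> t \<noteq> v \<and> t \<noteq> w \<and> u \<noteq> v \<and> u \<noteq> w \<and> v \<noteq> w"
proof -
  have c: "card {t,u,v,w} = 4" using assms by simp
  have "t \<noteq> u \<and> t \<noteq> v \<and> t \<noteq> w \<and> u \<noteq> v \<and> u \<noteq> w \<and> v \<noteq> w"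
  proof (rule ccontr)
    assume "\<not> ?thesis"
    then have "card {t,u,v,w} \<le> 3"
      by (auto simp: card_insert_if)
    then show False using c by simp
  qed
  moreover have "t \<in> {1,2,3,4} \<and> u \<in> {1,2,3,4} \<and> v \<in> {1,2,3,4} \<and> w \<in> {1,2,3,4}"
    using assms by blast
  ultimately show ?thesis by blast
qed

lemma perm_sum:
  fixes g :: "nat \<Rightarrow> nat \<Rightarrow> nat"
  assumes p: "{t,u,v,w} = {1,2,3,4::nat}" and sym: "\<And>i j. g i j = g j i"
  shows "g 1 2 + g 1 3 + g 1 4 + g 2 3 + g 2 4 + g 3 4 = g t u + g t v + g t w + g u v + g u w + g v w"
proof -
  have s: "g 2 (Suc 0) = g (Suc 0) 2" "g 3 (Suc 0) = g (Suc 0) 3" "g 4 (Suc 0) = g (Suc 0) 4" "g 3 2 = g 2 3" "g 4 2 = g 2 4" "g 4 3 = g 3 4"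
    using sym by auto
  from perm4[OF p] show ?thesis
    apply (simp only: insert_iff empty_iff simp_thms)
    apply (elim conjE disjE)
    apply (simp_all add: s)
    done
qed

lemma count_key:
  fixes R H :: "nat \<Rightarrow> nat \<Rightarrow> nat" and r :: nat
  assumes p: "{t,u,v,w} = {1,2,3,4::nat}"
  defines "g \<equiv> \<lambda>i j. max (if H i j \<le> r then R i j else 0) (if H j i \<le> r then R j i else 0)"
  shows "card {e\<in>EQ R. key R H e \<le> r} = g t u + g t v + g t w + g u v + g u w + g v w"
proof -
  have seq: "{e\<in>EQ R. key R H e \<le> r} = {(i,j,k). i\<in>Users \<and> j\<in>Users \<and> i<j \<and> k < g i j}"
  proof (intro set_eqI)
    fix e :: "nat\<times>nat\<times>nat"
    obtain i j k where e: "e = (i,j,k)" by (cases e)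
    show "e \<in> {e\<in>EQ R. key R H e \<le> r} \<longleftrightarrow> e \<in> {(i,j,k). i\<in>Users \<and> j\<in>Users \<and> i<j \<and> k < g i j}"
    proof (cases "(i,j,k) \<in> EQ R")
      case True
      then show ?thesis unfolding e using key_le_iff[OF True, of H r]
        by (auto simp: EQ_def g_def)
    next
      case False
      then show ?thesis unfolding e by (auto simp: EQ_def g_def split: if_splits)
    qed
  qed
  have "card {e\<in>EQ R. key R H e \<le> r} = g 1 2 + g 1 3 + g 1 4 + g 2 3 + g 2 4 + g 3 4"
    unfolding seq by (rule card_tri)
  also have "\<dots> = g t u + g t v + g t w + g u v + g u w + g v w"
    by (rule perm_sum[OF p]) (simp add: g_def max.commute)
  finally show ?thesis .
qed



lemma bitsD:
  assumes "x \<in> Bits R"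
  shows "src x \<in> Users" "dst x \<in> Users" "src x \<noteq> dst x"
  using assms by (auto simp: Bits_def src_def dst_def)

lemma partner:
  assumes x: "(a,b,k) \<in> Bits R" and y: "y \<in> Bits R"
  shows "eqof y = eqof (a,b,k) \<longleftrightarrow> y = (a,b,k) \<or> (y = (b,a,k) \<and> k < R b a)"
proof -
  obtain c d k' where yy: "y = (c,d,k')" by (cases y)
  have ab: "a \<noteq> b" using x by (auto simp: Bits_def)
  have cd: "c \<noteq> d" "k' < R c d" using y yy by (auto simp: Bits_def)
  show ?thesis
  proof
    assume "eqof y = eqof (a,b,k)"
    then have h: "min c d = min a b" "max c d = max a b" "k' = k"
      unfolding yy by (auto simp: eqof_def src_def dst_def)
    have "(c = a \<and> d = b) \<or> (c = b \<and> d = a)"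
      using h(1,2) ab cd(1) by (auto simp: min_def max_def split: if_splits)
    then show "y = (a,b,k) \<or> (y = (b,a,k) \<and> k < R b a)"
      using yy h(3) cd(2) by auto
  next
    assume "y = (a,b,k) \<or> (y = (b,a,k) \<and> k < R b a)"
    then show "eqof y = eqof (a,b,k)"
      by (auto simp: eqof_def src_def dst_def min_def max_def)
  qed
qed

lemma sos_from_orders:
  fixes q :: nat and nup ndn :: "nat \<Rightarrow> nat" and R :: "nat \<Rightarrow> nat \<Rightarrow> nat" and urk drk :: "nat \<Rightarrow> nat"
    and fu fd :: "nat\<times>nat\<times>nat \<Rightarrow> nat"
  assumes q_ge: "\<forall>i\<in>Users. nup i \<le> q \<and> ndn i \<le> q"
    and bu: "bij_betw fu (EQ R) {0..<card (EQ R)}"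
    and mu: "\<forall>e\<in>EQ R. \<forall>e'\<in>EQ R. key R (\<lambda>i j. urk i) e < key R (\<lambda>i j. urk i) e' \<longrightarrow> fu e < fu e'"
    and bd: "bij_betw fd (EQ R) {0..<card (EQ R)}"
    and md: "\<forall>e\<in>EQ R. \<forall>e'\<in>EQ R. key R (\<lambda>i j. drk j) e < key R (\<lambda>i j. drk j) e' \<longrightarrow> fd e < fd e'"
    and du: "\<forall>x\<in>Bits R. fu (eqof x) < nup (src x)"
    and dd: "\<forall>x\<in>Bits R. fd (eqof x) < ndn (dst x)"
  shows "\<exists>pos tp. sos_scheme q nup R urk drk pos tp \<and> (\<forall>m. \<forall>x\<in>Bits R. sos_decode q nup ndn R pos tp m x = m x)"
proof -
  define pos where "pos x = (q - 1 - fu (eqof x)) - (q - nup (src x))" for x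
  define lev where "lev e = q - 1 - fu e" for e
  define tp where "tp l = fd (the_inv_into (EQ R) lev l)" for l
  have eqE: "eqof x \<in> EQ R" if "x \<in> Bits R" for x using that eqof_Bits by blast
  have fuq: "fu e < q" if "e \<in> EQ R" for e
  proof -
    from that obtain x where "x \<in> Bits R" "e = eqof x" using eqof_Bits by blast
    then show ?thesis using du q_ge bitsD(1)[of x R] by fastforce
  qed
  have fu_inj: "inj_on fu (EQ R)" using bu by (simp add: bij_betw_def)
  have fd_inj: "inj_on fd (EQ R)" using bd by (simp add: bij_betw_def)
  have fu_img: "fu ` EQ R = {0..<card (EQ R)}" using bu by (simp add: bij_betw_def)
  have fd_img: "fd ` EQ R = {0..<card (EQ R)}" using bd by (simp add: bij_betw_def)
  have levq: "q - 1 - lev e = fu e" if "e \<in> EQ R" for e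
    using fuq[OF that] unfolding lev_def by simp
  have lev_inj: "inj_on lev (EQ R)"
  proof (rule inj_onI)
    fix e e' assume "e \<in> EQ R" "e' \<in> EQ R" "lev e = lev e'"
    then have "fu e = fu e'" using levq by metis
    then show "e = e'" using fu_inj \<open>e \<in> EQ R\<close> \<open>e' \<in> EQ R\<close> by (simp add: inj_on_eq_iff)
  qed
  have rl_eq: "rl q nup pos x = lev (eqof x)" if "x \<in> Bits R" for x
  proof -
    have "fu (eqof x) < nup (src x)" "nup (src x) \<le> q"
      using du that q_ge bitsD(1)[OF that] by auto
    then show ?thesis unfolding rl_def pos_def lev_def by simp
  qed
  have rl_iff: "rl q nup pos x = rl q nup pos y \<longleftrightarrow> eqof x = eqof y" if "x \<in> Bits R" "y \<in> Bits R" for x y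
    using rl_eq[OF that(1)] rl_eq[OF that(2)] eqE[OF that(1)] eqE[OF that(2)] lev_inj
    by (auto simp: inj_on_eq_iff)
  have Lev: "Levels q nup R pos = lev ` EQ R"
  proof -
    have "Levels q nup R pos = (\<lambda>x. lev (eqof x)) ` Bits R"
      unfolding Levels_def using rl_eq by (auto simp: image_iff)
    also have "\<dots> = lev ` (eqof ` Bits R)" by (simp add: image_image)
    finally show ?thesis by (simp add: eqof_Bits)
  qed
  have cardLev: "card (Levels q nup R pos) = card (EQ R)"
    unfolding Lev using lev_inj by (simp add: card_image)
  have tp_lev: "tp (lev e) = fd e" if "e \<in> EQ R" for e
    unfolding tp_def using the_inv_into_f_f[OF lev_inj that] by simp
  have keyset: "{H (src x) (dst x) | x. x \<in> Bits R \<and> rl q nup pos x = lev e}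
      = (\<lambda>x. H (src x) (dst x)) ` {x\<in>Bits R. eqof x = e}" if "e \<in> EQ R" for e and H :: "nat \<Rightarrow> nat \<Rightarrow> nat"
  proof -
    have iff: "rl q nup pos x = lev e \<longleftrightarrow> eqof x = e" if "x \<in> Bits R" for x
      using rl_eq[OF that] eqE[OF that] \<open>e \<in> EQ R\<close> lev_inj by (auto simp: inj_on_eq_iff)
    show ?thesis
    proof (intro set_eqI iffI)
      fix z assume "z \<in> {H (src x) (dst x) | x. x \<in> Bits R \<and> rl q nup pos x = lev e}"
      then obtain x where "x \<in> Bits R" "rl q nup pos x = lev e" "z = H (src x) (dst x)" by blast
      then show "z \<in> (\<lambda>x. H (src x) (dst x)) ` {x\<in>Bits R. eqof x = e}" using iff by auto
    next
      fix z assume "z \<in> (\<lambda>x. H (src x) (dst x)) ` {x\<in>Bits R. eqof x = e}"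
      then obtain x where "x \<in> Bits R" "eqof x = e" "z = H (src x) (dst x)" by blast
      then show "z \<in> {H (src x) (dst x) | x. x \<in> Bits R \<and> rl q nup pos x = lev e}" using iff by blast
    qed
  qed
  have ukey_lev: "ukey q nup R pos urk (lev e) = key R (\<lambda>i j. urk i) e" if "e \<in> EQ R" for e
    unfolding ukey_def key_def using keyset[OF that, of "\<lambda>i j. urk i"] by simp
  have dkey_lev: "dkey q nup R pos drk (lev e) = key R (\<lambda>i j. drk j) e" if "e \<in> EQ R" for e
    unfolding dkey_def key_def using keyset[OF that, of "\<lambda>i j. drk j"] by simp
  have scheme: "sos_scheme q nup R urk drk pos tp"
    unfolding sos_scheme_def
  proof (intro conjI)
    show "\<forall>x\<in>Bits R. pos x < nup (src x)"
    proof
      fix x assume x: "x \<in> Bits R"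
      have "fu (eqof x) < nup (src x)" "nup (src x) \<le> q"
        using du x q_ge bitsD(1)[OF x] by auto
      then show "pos x < nup (src x)" unfolding pos_def by simp
    qed
    show "\<forall>x\<in>Bits R. \<forall>y\<in>Bits R. x \<noteq> y \<and> rl q nup pos x = rl q nup pos y \<longrightarrow> src x = dst y \<and> dst x = src y"
    proof (intro ballI impI)
      fix x y assume x: "x \<in> Bits R" and y: "y \<in> Bits R" and h: "x \<noteq> y \<and> rl q nup pos x = rl q nup pos y"
      obtain a b k where xx: "x = (a,b,k)" by (cases x)
      have "eqof y = eqof (a,b,k)" using h rl_iff[OF x y] xx by simp
      then have "y = (b,a,k)" using partner[of a b k R y] x y xx h by auto
      then show "src x = dst y \<and> dst x = src y" using xx by (simp add: src_def dst_def)
    qed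
    show "\<forall>i\<in>Users. \<forall>j\<in>Users. i \<noteq> j \<longrightarrow>
          card {l. \<exists>k k'. k < R i j \<and> k' < R j i \<and> rl q nup pos (i,j,k) = l
                          \<and> rl q nup pos (j,i,k') = l} = min (R i j) (R j i)"
    proof (intro ballI impI)
      fix i j assume i: "i \<in> Users" and j: "j \<in> Users" and ij: "i \<noteq> j"
      have b1: "(i,j,k) \<in> Bits R" if "k < R i j" for k using that i j ij by (simp add: Bits_def)
      have b2: "(j,i,k) \<in> Bits R" if "k < R j i" for k using that i j ij by (simp add: Bits_def)
      have "{l. \<exists>k k'. k < R i j \<and> k' < R j i \<and> rl q nup pos (i,j,k) = l \<and> rl q nup pos (j,i,k') = l}
            = (\<lambda>k. rl q nup pos (i,j,k)) ` {..<min (R i j) (R j i)}"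
      proof (intro set_eqI iffI)
        fix l assume "l \<in> {l. \<exists>k k'. k < R i j \<and> k' < R j i \<and> rl q nup pos (i,j,k) = l \<and> rl q nup pos (j,i,k') = l}"
        then obtain k k' where kk: "k < R i j" "k' < R j i" "rl q nup pos (i,j,k) = l" "rl q nup pos (j,i,k') = l"
          by blast
        have "eqof (i,j,k) = eqof (j,i,k')" using rl_iff[OF b1[OF kk(1)] b2[OF kk(2)]] kk(3,4) by simp
        then have "k = k'" by (simp add: eqof_def src_def dst_def)
        then show "l \<in> (\<lambda>k. rl q nup pos (i,j,k)) ` {..<min (R i j) (R j i)}" using kk by auto
      next
        fix l assume "l \<in> (\<lambda>k. rl q nup pos (i,j,k)) ` {..<min (R i j) (R j i)}"
        then obtain k where k: "k < R i j" "k < R j i" "l = rl q nup pos (i,j,k)" by auto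
        have "eqof (i,j,k) = eqof (j,i,k)" by (simp add: eqof_def src_def dst_def min.commute max.commute)
        then have "rl q nup pos (i,j,k) = rl q nup pos (j,i,k)" using rl_iff[OF b1[OF k(1)] b2[OF k(2)]] by simp
        then show "l \<in> {l. \<exists>k k'. k < R i j \<and> k' < R j i \<and> rl q nup pos (i,j,k) = l \<and> rl q nup pos (j,i,k') = l}"
          using k by auto
      qed
      moreover have "inj_on (\<lambda>k. rl q nup pos (i,j,k)) {..<min (R i j) (R j i)}"
      proof (rule inj_onI)
        fix k k' assume "k \<in> {..<min (R i j) (R j i)}" "k' \<in> {..<min (R i j) (R j i)}"
          "rl q nup pos (i,j,k) = rl q nup pos (i,j,k')"
        then have "eqof (i,j,k) = eqof (i,j,k')" using rl_iff[OF b1 b1] by simp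
        then show "k = k'" by (simp add: eqof_def src_def dst_def)
      qed
      ultimately show "card {l. \<exists>k k'. k < R i j \<and> k' < R j i \<and> rl q nup pos (i,j,k) = l
                          \<and> rl q nup pos (j,i,k') = l} = min (R i j) (R j i)"
        by (simp add: card_image)
    qed
    show "(\<lambda>l. q - 1 - l) ` Levels q nup R pos = {0..<card (Levels q nup R pos)}"
    proof -
      have "(\<lambda>l. q - 1 - l) ` Levels q nup R pos = (\<lambda>e. q - 1 - lev e) ` EQ R"
        unfolding Lev by (simp add: image_image)
      also have "\<dots> = fu ` EQ R" using levq by (intro image_cong) auto
      finally show ?thesis using fu_img cardLev by simp
    qed
    show "\<forall>l\<in>Levels q nup R pos. \<forall>l'\<in>Levels q nup R pos.
          ukey q nup R pos urk l < ukey q nup R pos urk l' \<longrightarrow> q - 1 - l < q - 1 - l'"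
      unfolding Lev using ukey_lev levq mu by auto
    show "inj_on tp (Levels q nup R pos)"
    proof (rule inj_onI)
      fix l l' assume "l \<in> Levels q nup R pos" "l' \<in> Levels q nup R pos" "tp l = tp l'"
      then obtain e e' where "e \<in> EQ R" "e' \<in> EQ R" "l = lev e" "l' = lev e'" "fd e = fd e'"
        unfolding Lev using tp_lev by auto
      then show "l = l'" using fd_inj by (simp add: inj_on_eq_iff)
    qed
    show "tp ` Levels q nup R pos = {0..<card (Levels q nup R pos)}"
    proof -
      have "tp ` Levels q nup R pos = fd ` EQ R" unfolding Lev image_image
        using tp_lev by (intro image_cong) auto
      then show ?thesis using fd_img cardLev by simp
    qed
    show "\<forall>l\<in>Levels q nup R pos. \<forall>l'\<in>Levels q nup R pos.
          dkey q nup R pos drk l < dkey q nup R pos drk l' \<longrightarrow> tp l < tp l'"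
      unfolding Lev using dkey_lev tp_lev md by auto
  qed
  have decode: "sos_decode q nup ndn R pos tp m x = m x" if x: "x \<in> Bits R" for m x
  proof -
    obtain a b k where xx: "x = (a,b,k)" by (cases x)
    have ab: "a \<in> Users" "b \<in> Users" "a \<noteq> b" using x xx by (auto simp: Bits_def)
    define e where "e = eqof x"
    define l where "l = rl q nup pos x"
    have eE: "e \<in> EQ R" using eqE[OF x] e_def by simp
    have l_lev: "l = lev e" using rl_eq[OF x] l_def e_def by simp
    have lL: "l \<in> Levels q nup R pos" unfolding Lev l_lev using eE by simp
    have tpl: "tp l = fd e" using tp_lev[OF eE] l_lev by simp
    have fdb: "fd e < ndn b" using dd x xx e_def by (auto simp: dst_def)
    have ndnb: "ndn b \<le> q" using q_ge ab by auto
    have lq: "l < q" using l_lev fuq[OF eE] unfolding lev_def by simp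
    have atl: "(y \<in> Bits R \<and> rl q nup pos y = l) \<longleftrightarrow> (y = (a,b,k) \<or> (y = (b,a,k) \<and> k < R b a))" for y
    proof
      assume h: "y \<in> Bits R \<and> rl q nup pos y = l"
      then have yB: "y \<in> Bits R" by simp
      have "eqof y = eqof x" using rl_iff[OF yB x] h l_def by simp
      then have "y \<in> Bits R" "eqof y = eqof (a,b,k)" using yB xx by auto
      then show "y = (a,b,k) \<or> (y = (b,a,k) \<and> k < R b a)" using partner[of a b k R y] x xx by auto
    next
      assume h: "y = (a,b,k) \<or> (y = (b,a,k) \<and> k < R b a)"
      then have yB: "y \<in> Bits R" using x xx ab by (auto simp: Bits_def)
      have "eqof y = eqof (a,b,k)" using partner[of a b k R y] x xx yB h by auto
      then show "y \<in> Bits R \<and> rl q nup pos y = l" using rl_iff[OF yB x] l_def xx yB by simp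
    qed
    have sh: "shiftS (q - nup i) (user_tx R pos m i) l \<longleftrightarrow> (\<exists>y. (y \<in> Bits R \<and> rl q nup pos y = l) \<and> src y = i \<and> m y)"
      for i
    proof
      assume "shiftS (q - nup i) (user_tx R pos m i) l"
      then obtain y where "y \<in> Bits R" "src y = i" "pos y = l - (q - nup i)" "m y" "q - nup i \<le> l"
        unfolding shiftS_def user_tx_def by blast
      then show "\<exists>y. (y \<in> Bits R \<and> rl q nup pos y = l) \<and> src y = i \<and> m y"
        unfolding rl_def by (intro exI[of _ y]) auto
    next
      assume "\<exists>y. (y \<in> Bits R \<and> rl q nup pos y = l) \<and> src y = i \<and> m y"
      then obtain y where "y \<in> Bits R" "rl q nup pos y = l" "src y = i" "m y" by blast
      then show "shiftS (q - nup i) (user_tx R pos m i) l"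
        unfolding shiftS_def user_tx_def rl_def by auto
    qed
    have S: "{i \<in> Users. shiftS (q - nup i) (user_tx R pos m i) l}
        = (if m (a,b,k) then {a} else {}) \<union> (if k < R b a \<and> m (b,a,k) then {b} else {})"
      unfolding sh atl using ab by (auto simp: src_def)
    have own: "(\<exists>y\<in>Bits R. src y = b \<and> rl q nup pos y = l \<and> m y) \<longleftrightarrow> (k < R b a \<and> m (b,a,k))"
    proof -
      have "(\<exists>y\<in>Bits R. src y = b \<and> rl q nup pos y = l \<and> m y) \<longleftrightarrow>
            (\<exists>y. (y \<in> Bits R \<and> rl q nup pos y = l) \<and> src y = b \<and> m y)" by blast
      also have "\<dots> \<longleftrightarrow> (\<exists>y. (y = (a,b,k) \<or> (y = (b,a,k) \<and> k < R b a)) \<and> src y = b \<and> m y)"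
        unfolding atl ..
      also have "\<dots> \<longleftrightarrow> (k < R b a \<and> m (b,a,k))" using ab by (auto simp: src_def)
      finally show ?thesis .
    qed
    have rtx: "relay_tx q nup R pos tp m (tp l) \<longleftrightarrow> relay_rx q nup R pos m l"
    proof
      assume "relay_tx q nup R pos tp m (tp l)"
      then obtain l' where "l' \<in> Levels q nup R pos" "tp l' = tp l" "relay_rx q nup R pos m l'"
        unfolding relay_tx_def by blast
      then show "relay_rx q nup R pos m l" using scheme lL unfolding sos_scheme_def
        by (metis inj_on_eq_iff)
    next
      assume "relay_rx q nup R pos m l"
      then show "relay_tx q nup R pos tp m (tp l)" unfolding relay_tx_def using lL by blast
    qed
    have urx: "user_rx q nup ndn R pos tp m b (tp l + (q - ndn b)) \<longleftrightarrow> relay_rx q nup R pos m l"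
      unfolding user_rx_def shiftS_def using tpl fdb ndnb rtx by auto
    have d1: "dst x = b" using xx by (simp add: dst_def)
    have "sos_decode q nup ndn R pos tp m x =
        (user_rx q nup ndn R pos tp m b (tp l + (q - ndn b)) \<noteq> (\<exists>y\<in>Bits R. src y = b \<and> rl q nup pos y = l \<and> m y))"
      unfolding sos_decode_def Let_def d1 l_def ..
    also have "\<dots> = (relay_rx q nup R pos m l \<noteq> (k < R b a \<and> m (b,a,k)))" using urx own by simp
    also have "\<dots> = (odd (card ((if m (a,b,k) then {a} else {}) \<union> (if k < R b a \<and> m (b,a,k) then {b} else {})))
         \<noteq> (k < R b a \<and> m (b,a,k)))"
      unfolding relay_rx_def S using lq by simp
    also have "\<dots> = m x" using ab xx by (cases "m (a,b,k)"; cases "k < R b a \<and> m (b,a,k)") auto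
    finally show ?thesis .
  qed
  show ?thesis using scheme decode by blast
qed



lemma Phi_ge:
  fixes R :: "nat \<Rightarrow> nat \<Rightarrow> nat"
  shows "R p s + R p r + max (R s r) (R r s) \<le> Phi R p s r"
    "R s p + R s r + max (R p r) (R r p) \<le> Phi R p s r"
    "R r p + R r s + max (R p s) (R s p) \<le> Phi R p s r"
  by (simp_all add: Phi_def)

lemma tri_bound:
  fixes R :: "nat \<Rightarrow> nat \<Rightarrow> nat"
  assumes h1: "X + Phi R u v w \<le> N"
    and h2: "max (R w u + R u v + R v w) (R u w + R w v + R v u) + X \<le> N"
  shows "X + (max (R u v) (R v u) + max (R u w) (R w u) + max (R v w) (R w v)) \<le> N"
proof -
  note P = Phi_ge[where R=R and p=u and s=v and r=w]
  have m: "max x y = x \<or> max x y = y" for x y :: nat by (simp add: max_def)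
  have cb: "x \<le> max x y \<and> y \<le> max x y" for x y :: nat by simp
  from m[of "R u v" "R v u"] m[of "R u w" "R w u"] m[of "R v w" "R w v"] show ?thesis
    using h1 h2 P cb[of "R u v" "R v u"] cb[of "R u w" "R w u"] cb[of "R v w" "R w v"]
      cb[of "R w u + R u v + R v w" "R u w + R w v + R v u"]
    by (elim disjE; linarith)
qed

lemma tour_bound:
  fixes R :: "nat \<Rightarrow> nat \<Rightarrow> nat"
  assumes c6: "R t u + R t v + R t w + Phi R u v w \<le> N"
    and c7: "R u t + R u v + R u w + Phi R t v w \<le> N"
    and c8: "R v t + R v u + R v w + Phi R t u w \<le> N"
    and c9: "R w t + R w u + R w v + Phi R t u v \<le> N"
    and E3: "\<forall>i j k l. {i, j, k, l} = {t,u,v,w} \<longrightarrow>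
               R i j + R j k + R k i + max (R l i + R l j + R l k) (R i l + R j l + R k l) \<le> N"
    and E4: "\<forall>i j k l. {i, j, k, l} = {t,u,v,w} \<longrightarrow>
               R i j + R j k + R k l + R l i + max (R j l) (R l j) + max (R i k) (R k i) \<le> N"
  shows "max (R t u) (R u t) + max (R t v) (R v t) + max (R t w) (R w t) + max (R u v) (R v u)
         + max (R u w) (R w u) + max (R v w) (R w v) \<le> N"
proof -
  have cb: "x \<le> max x y \<and> y \<le> max x y" for x y :: nat by simp
  have e3_0: "R u v + R v w + R w u + max (R t u + R t v + R t w) (R u t + R v t + R w t) \<le> N"
    using E3 by (simp add: insert_commute)
  have e3_1: "R u w + R w v + R v u + max (R t u + R t w + R t v) (R u t + R w t + R v t) \<le> N"
    using E3 by (simp add: insert_commute)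
  have e3_2: "R t v + R v w + R w t + max (R u t + R u v + R u w) (R t u + R v u + R w u) \<le> N"
    using E3 by (simp add: insert_commute)
  have e3_3: "R t w + R w v + R v t + max (R u t + R u w + R u v) (R t u + R w u + R v u) \<le> N"
    using E3 by (simp add: insert_commute)
  have e3_4: "R t u + R u w + R w t + max (R v t + R v u + R v w) (R t v + R u v + R w v) \<le> N"
    using E3 by (simp add: insert_commute)
  have e3_5: "R t w + R w u + R u t + max (R v t + R v w + R v u) (R t v + R w v + R u v) \<le> N"
    using E3 by (simp add: insert_commute)
  have e3_6: "R t u + R u v + R v t + max (R w t + R w u + R w v) (R t w + R u w + R v w) \<le> N"
    using E3 by (simp add: insert_commute)
  have e3_7: "R t v + R v u + R u t + max (R w t + R w v + R w u) (R t w + R v w + R u w) \<le> N"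
    using E3 by (simp add: insert_commute)
  have e4_0: "R t u + R u v + R v w + R w t + max (R u w) (R w u) + max (R t v) (R v t) \<le> N"
    using E4 by (simp add: insert_commute)
  have e4_1: "R t u + R u w + R w v + R v t + max (R u v) (R v u) + max (R t w) (R w t) \<le> N"
    using E4 by (simp add: insert_commute)
  have e4_2: "R t v + R v u + R u w + R w t + max (R v w) (R w v) + max (R t u) (R u t) \<le> N"
    using E4 by (simp add: insert_commute)
  have e4_3: "R t w + R w v + R v u + R u t + max (R w u) (R u w) + max (R t v) (R v t) \<le> N"
    using E4 by (simp add: insert_commute)
  have e4_4: "R t v + R v w + R w u + R u t + max (R v u) (R u v) + max (R t w) (R w t) \<le> N"
    using E4 by (simp add: insert_commute)
  have e4_5: "R t w + R w u + R u v + R v t + max (R w v) (R v w) + max (R t u) (R u t) \<le> N"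
    using E4 by (simp add: insert_commute)
  show ?thesis
  proof (cases "R u t \<le> R t u")
    case h0: True
    show ?thesis
    proof (cases "R v t \<le> R t v")
      case h1: True
      show ?thesis
      proof (cases "R w t \<le> R t w")
        case h2: True
        show ?thesis
        proof (cases "R v u \<le> R u v")
          case h3: True
          show ?thesis
          proof (cases "R w u \<le> R u w")
            case h4: True
            show ?thesis
            proof (cases "R w v \<le> R v w")
              case h5: True
              show ?thesis using max_absorb1[OF h0] max_absorb1[OF h1] max_absorb1[OF h2] max_absorb1[OF h3] max_absorb1[OF h4] max_absorb1[OF h5] c6 Phi_ge(1)[where R=R and p=u and s=v and r=w] cb[of "R v w" "R w v"] by linarith
            next
              case False
              then have h5: "R v w \<le> R w v" by simp
              show ?thesis using max_absorb1[OF h0] max_absorb1[OF h1] max_absorb1[OF h2] max_absorb1[OF h3] max_absorb1[OF h4] max_absorb2[OF h5] c6 Phi_ge(1)[where R=R and p=u and s=v and r=w] cb[of "R v w" "R w v"] by linarith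
            qed
          next
            case False
            then have h4: "R u w \<le> R w u" by simp
            show ?thesis
            proof (cases "R w v \<le> R v w")
              case h5: True
              show ?thesis using max_absorb1[OF h0] max_absorb1[OF h1] max_absorb1[OF h2] max_absorb1[OF h3] max_absorb2[OF h4] max_absorb1[OF h5] e3_0 cb[of "R t u + R t v + R t w" "R u t + R v t + R w t"] by linarith
            next
              case False
              then have h5: "R v w \<le> R w v" by simp
              show ?thesis using max_absorb1[OF h0] max_absorb1[OF h1] max_absorb1[OF h2] max_absorb1[OF h3] max_absorb2[OF h4] max_absorb2[OF h5] c6 Phi_ge(3)[where R=R and p=u and s=v and r=w] cb[of "R u v" "R v u"] by linarith
            qed
          qed
        next
          case False
          then have h3: "R u v \<le> R v u" by simp
          show ?thesis
          proof (cases "R w u \<le> R u w")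
            case h4: True
            show ?thesis
            proof (cases "R w v \<le> R v w")
              case h5: True
              show ?thesis using max_absorb1[OF h0] max_absorb1[OF h1] max_absorb1[OF h2] max_absorb2[OF h3] max_absorb1[OF h4] max_absorb1[OF h5] c6 Phi_ge(2)[where R=R and p=u and s=v and r=w] cb[of "R u w" "R w u"] by linarith
            next
              case False
              then have h5: "R v w \<le> R w v" by simp
              show ?thesis using max_absorb1[OF h0] max_absorb1[OF h1] max_absorb1[OF h2] max_absorb2[OF h3] max_absorb1[OF h4] max_absorb2[OF h5] e3_1 cb[of "R t u + R t w + R t v" "R u t + R w t + R v t"] by linarith
            qed
          next
            case False
            then have h4: "R u w \<le> R w u" by simp
            show ?thesis
            proof (cases "R w v \<le> R v w")
              case h5: True
              show ?thesis using max_absorb1[OF h0] max_absorb1[OF h1] max_absorb1[OF h2] max_absorb2[OF h3] max_absorb2[OF h4] max_absorb1[OF h5] c6 Phi_ge(2)[where R=R and p=u and s=v and r=w] cb[of "R u w" "R w u"] by linarith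
            next
              case False
              then have h5: "R v w \<le> R w v" by simp
              show ?thesis using max_absorb1[OF h0] max_absorb1[OF h1] max_absorb1[OF h2] max_absorb2[OF h3] max_absorb2[OF h4] max_absorb2[OF h5] c6 Phi_ge(3)[where R=R and p=u and s=v and r=w] cb[of "R u v" "R v u"] by linarith
            qed
          qed
        qed
      next
        case False
        then have h2: "R t w \<le> R w t" by simp
        show ?thesis
        proof (cases "R v u \<le> R u v")
          case h3: True
          show ?thesis
          proof (cases "R w u \<le> R u w")
            case h4: True
            show ?thesis
            proof (cases "R w v \<le> R v w")
              case h5: True
              show ?thesis using max_absorb1[OF h0] max_absorb1[OF h1] max_absorb2[OF h2] max_absorb1[OF h3] max_absorb1[OF h4] max_absorb1[OF h5] e4_0 cb[of "R u w" "R w u"] cb[of "R t v" "R v t"] by linarith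
            next
              case False
              then have h5: "R v w \<le> R w v" by simp
              show ?thesis using max_absorb1[OF h0] max_absorb1[OF h1] max_absorb2[OF h2] max_absorb1[OF h3] max_absorb1[OF h4] max_absorb2[OF h5] e3_4 cb[of "R v t + R v u + R v w" "R t v + R u v + R w v"] by linarith
            qed
          next
            case False
            then have h4: "R u w \<le> R w u" by simp
            show ?thesis
            proof (cases "R w v \<le> R v w")
              case h5: True
              show ?thesis using max_absorb1[OF h0] max_absorb1[OF h1] max_absorb2[OF h2] max_absorb1[OF h3] max_absorb2[OF h4] max_absorb1[OF h5] e4_0 cb[of "R u w" "R w u"] cb[of "R t v" "R v t"] by linarith
            next
              case False
              then have h5: "R v w \<le> R w v" by simp
              show ?thesis using max_absorb1[OF h0] max_absorb1[OF h1] max_absorb2[OF h2] max_absorb1[OF h3] max_absorb2[OF h4] max_absorb2[OF h5] c9 Phi_ge(1)[where R=R and p=t and s=u and r=v] cb[of "R u v" "R v u"] by linarith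
            qed
          qed
        next
          case False
          then have h3: "R u v \<le> R v u" by simp
          show ?thesis
          proof (cases "R w u \<le> R u w")
            case h4: True
            show ?thesis
            proof (cases "R w v \<le> R v w")
              case h5: True
              show ?thesis using max_absorb1[OF h0] max_absorb1[OF h1] max_absorb2[OF h2] max_absorb2[OF h3] max_absorb1[OF h4] max_absorb1[OF h5] e4_2 cb[of "R v w" "R w v"] cb[of "R t u" "R u t"] by linarith
            next
              case False
              then have h5: "R v w \<le> R w v" by simp
              show ?thesis using max_absorb1[OF h0] max_absorb1[OF h1] max_absorb2[OF h2] max_absorb2[OF h3] max_absorb1[OF h4] max_absorb2[OF h5] e4_2 cb[of "R v w" "R w v"] cb[of "R t u" "R u t"] by linarith
            qed
          next
            case False
            then have h4: "R u w \<le> R w u" by simp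
            show ?thesis
            proof (cases "R w v \<le> R v w")
              case h5: True
              show ?thesis using max_absorb1[OF h0] max_absorb1[OF h1] max_absorb2[OF h2] max_absorb2[OF h3] max_absorb2[OF h4] max_absorb1[OF h5] e3_2 cb[of "R u t + R u v + R u w" "R t u + R v u + R w u"] by linarith
            next
              case False
              then have h5: "R v w \<le> R w v" by simp
              show ?thesis using max_absorb1[OF h0] max_absorb1[OF h1] max_absorb2[OF h2] max_absorb2[OF h3] max_absorb2[OF h4] max_absorb2[OF h5] c9 Phi_ge(1)[where R=R and p=t and s=u and r=v] cb[of "R u v" "R v u"] by linarith
            qed
          qed
        qed
      qed
    next
      case False
      then have h1: "R t v \<le> R v t" by simp
      show ?thesis
      proof (cases "R w t \<le> R t w")
        case h2: True
        show ?thesis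
        proof (cases "R v u \<le> R u v")
          case h3: True
          show ?thesis
          proof (cases "R w u \<le> R u w")
            case h4: True
            show ?thesis
            proof (cases "R w v \<le> R v w")
              case h5: True
              show ?thesis using max_absorb1[OF h0] max_absorb2[OF h1] max_absorb1[OF h2] max_absorb1[OF h3] max_absorb1[OF h4] max_absorb1[OF h5] e3_6 cb[of "R w t + R w u + R w v" "R t w + R u w + R v w"] by linarith
            next
              case False
              then have h5: "R v w \<le> R w v" by simp
              show ?thesis using max_absorb1[OF h0] max_absorb2[OF h1] max_absorb1[OF h2] max_absorb1[OF h3] max_absorb1[OF h4] max_absorb2[OF h5] e4_1 cb[of "R u v" "R v u"] cb[of "R t w" "R w t"] by linarith
            qed
          next
            case False
            then have h4: "R u w \<le> R w u" by simp
            show ?thesis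
            proof (cases "R w v \<le> R v w")
              case h5: True
              show ?thesis using max_absorb1[OF h0] max_absorb2[OF h1] max_absorb1[OF h2] max_absorb1[OF h3] max_absorb2[OF h4] max_absorb1[OF h5] e4_5 cb[of "R w v" "R v w"] cb[of "R t u" "R u t"] by linarith
            next
              case False
              then have h5: "R v w \<le> R w v" by simp
              show ?thesis using max_absorb1[OF h0] max_absorb2[OF h1] max_absorb1[OF h2] max_absorb1[OF h3] max_absorb2[OF h4] max_absorb2[OF h5] e4_5 cb[of "R w v" "R v w"] cb[of "R t u" "R u t"] by linarith
            qed
          qed
        next
          case False
          then have h3: "R u v \<le> R v u" by simp
          show ?thesis
          proof (cases "R w u \<le> R u w")
            case h4: True
            show ?thesis
            proof (cases "R w v \<le> R v w")
              case h5: True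
              show ?thesis using max_absorb1[OF h0] max_absorb2[OF h1] max_absorb1[OF h2] max_absorb2[OF h3] max_absorb1[OF h4] max_absorb1[OF h5] c8 Phi_ge(1)[where R=R and p=t and s=u and r=w] cb[of "R u w" "R w u"] by linarith
            next
              case False
              then have h5: "R v w \<le> R w v" by simp
              show ?thesis using max_absorb1[OF h0] max_absorb2[OF h1] max_absorb1[OF h2] max_absorb2[OF h3] max_absorb1[OF h4] max_absorb2[OF h5] e4_1 cb[of "R u v" "R v u"] cb[of "R t w" "R w t"] by linarith
            qed
          next
            case False
            then have h4: "R u w \<le> R w u" by simp
            show ?thesis
            proof (cases "R w v \<le> R v w")
              case h5: True
              show ?thesis using max_absorb1[OF h0] max_absorb2[OF h1] max_absorb1[OF h2] max_absorb2[OF h3] max_absorb2[OF h4] max_absorb1[OF h5] c8 Phi_ge(1)[where R=R and p=t and s=u and r=w] cb[of "R u w" "R w u"] by linarith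
            next
              case False
              then have h5: "R v w \<le> R w v" by simp
              show ?thesis using max_absorb1[OF h0] max_absorb2[OF h1] max_absorb1[OF h2] max_absorb2[OF h3] max_absorb2[OF h4] max_absorb2[OF h5] e3_3 cb[of "R u t + R u w + R u v" "R t u + R w u + R v u"] by linarith
            qed
          qed
        qed
      next
        case False
        then have h2: "R t w \<le> R w t" by simp
        show ?thesis
        proof (cases "R v u \<le> R u v")
          case h3: True
          show ?thesis
          proof (cases "R w u \<le> R u w")
            case h4: True
            show ?thesis
            proof (cases "R w v \<le> R v w")
              case h5: True
              show ?thesis using max_absorb1[OF h0] max_absorb2[OF h1] max_absorb2[OF h2] max_absorb1[OF h3] max_absorb1[OF h4] max_absorb1[OF h5] e4_0 cb[of "R u w" "R w u"] cb[of "R t v" "R v t"] by linarith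
            next
              case False
              then have h5: "R v w \<le> R w v" by simp
              show ?thesis using max_absorb1[OF h0] max_absorb2[OF h1] max_absorb2[OF h2] max_absorb1[OF h3] max_absorb1[OF h4] max_absorb2[OF h5] e4_1 cb[of "R u v" "R v u"] cb[of "R t w" "R w t"] by linarith
            qed
          next
            case False
            then have h4: "R u w \<le> R w u" by simp
            show ?thesis
            proof (cases "R w v \<le> R v w")
              case h5: True
              show ?thesis using max_absorb1[OF h0] max_absorb2[OF h1] max_absorb2[OF h2] max_absorb1[OF h3] max_absorb2[OF h4] max_absorb1[OF h5] e4_0 cb[of "R u w" "R w u"] cb[of "R t v" "R v t"] by linarith
            next
              case False
              then have h5: "R v w \<le> R w v" by simp
              show ?thesis using max_absorb1[OF h0] max_absorb2[OF h1] max_absorb2[OF h2] max_absorb1[OF h3] max_absorb2[OF h4] max_absorb2[OF h5] e3_6 cb[of "R w t + R w u + R w v" "R t w + R u w + R v w"] by linarith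
            qed
          qed
        next
          case False
          then have h3: "R u v \<le> R v u" by simp
          show ?thesis
          proof (cases "R w u \<le> R u w")
            case h4: True
            show ?thesis
            proof (cases "R w v \<le> R v w")
              case h5: True
              show ?thesis using max_absorb1[OF h0] max_absorb2[OF h1] max_absorb2[OF h2] max_absorb2[OF h3] max_absorb1[OF h4] max_absorb1[OF h5] e3_4 cb[of "R v t + R v u + R v w" "R t v + R u v + R w v"] by linarith
            next
              case False
              then have h5: "R v w \<le> R w v" by simp
              show ?thesis using max_absorb1[OF h0] max_absorb2[OF h1] max_absorb2[OF h2] max_absorb2[OF h3] max_absorb1[OF h4] max_absorb2[OF h5] e4_1 cb[of "R u v" "R v u"] cb[of "R t w" "R w t"] by linarith
            qed
          next
            case False
            then have h4: "R u w \<le> R w u" by simp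
            show ?thesis
            proof (cases "R w v \<le> R v w")
              case h5: True
              show ?thesis using max_absorb1[OF h0] max_absorb2[OF h1] max_absorb2[OF h2] max_absorb2[OF h3] max_absorb2[OF h4] max_absorb1[OF h5] c8 Phi_ge(3)[where R=R and p=t and s=u and r=w] cb[of "R t u" "R u t"] by linarith
            next
              case False
              then have h5: "R v w \<le> R w v" by simp
              show ?thesis using max_absorb1[OF h0] max_absorb2[OF h1] max_absorb2[OF h2] max_absorb2[OF h3] max_absorb2[OF h4] max_absorb2[OF h5] c9 Phi_ge(3)[where R=R and p=t and s=u and r=v] cb[of "R t u" "R u t"] by linarith
            qed
          qed
        qed
      qed
    qed
  next
    case False
    then have h0: "R t u \<le> R u t" by simp
    show ?thesis
    proof (cases "R v t \<le> R t v")
      case h1: True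
      show ?thesis
      proof (cases "R w t \<le> R t w")
        case h2: True
        show ?thesis
        proof (cases "R v u \<le> R u v")
          case h3: True
          show ?thesis
          proof (cases "R w u \<le> R u w")
            case h4: True
            show ?thesis
            proof (cases "R w v \<le> R v w")
              case h5: True
              show ?thesis using max_absorb2[OF h0] max_absorb1[OF h1] max_absorb1[OF h2] max_absorb1[OF h3] max_absorb1[OF h4] max_absorb1[OF h5] c7 Phi_ge(1)[where R=R and p=t and s=v and r=w] cb[of "R v w" "R w v"] by linarith
            next
              case False
              then have h5: "R v w \<le> R w v" by simp
              show ?thesis using max_absorb2[OF h0] max_absorb1[OF h1] max_absorb1[OF h2] max_absorb1[OF h3] max_absorb1[OF h4] max_absorb2[OF h5] c7 Phi_ge(1)[where R=R and p=t and s=v and r=w] cb[of "R v w" "R w v"] by linarith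
            qed
          next
            case False
            then have h4: "R u w \<le> R w u" by simp
            show ?thesis
            proof (cases "R w v \<le> R v w")
              case h5: True
              show ?thesis using max_absorb2[OF h0] max_absorb1[OF h1] max_absorb1[OF h2] max_absorb1[OF h3] max_absorb2[OF h4] max_absorb1[OF h5] e4_4 cb[of "R v u" "R u v"] cb[of "R t w" "R w t"] by linarith
            next
              case False
              then have h5: "R v w \<le> R w v" by simp
              show ?thesis using max_absorb2[OF h0] max_absorb1[OF h1] max_absorb1[OF h2] max_absorb1[OF h3] max_absorb2[OF h4] max_absorb2[OF h5] e3_5 cb[of "R v t + R v w + R v u" "R t v + R w v + R u v"] by linarith
            qed
          qed
        next
          case False
          then have h3: "R u v \<le> R v u" by simp
          show ?thesis
          proof (cases "R w u \<le> R u w")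
            case h4: True
            show ?thesis
            proof (cases "R w v \<le> R v w")
              case h5: True
              show ?thesis using max_absorb2[OF h0] max_absorb1[OF h1] max_absorb1[OF h2] max_absorb2[OF h3] max_absorb1[OF h4] max_absorb1[OF h5] e3_7 cb[of "R w t + R w v + R w u" "R t w + R v w + R u w"] by linarith
            next
              case False
              then have h5: "R v w \<le> R w v" by simp
              show ?thesis using max_absorb2[OF h0] max_absorb1[OF h1] max_absorb1[OF h2] max_absorb2[OF h3] max_absorb1[OF h4] max_absorb2[OF h5] e4_3 cb[of "R w u" "R u w"] cb[of "R t v" "R v t"] by linarith
            qed
          next
            case False
            then have h4: "R u w \<le> R w u" by simp
            show ?thesis
            proof (cases "R w v \<le> R v w")
              case h5: True
              show ?thesis using max_absorb2[OF h0] max_absorb1[OF h1] max_absorb1[OF h2] max_absorb2[OF h3] max_absorb2[OF h4] max_absorb1[OF h5] e4_4 cb[of "R v u" "R u v"] cb[of "R t w" "R w t"] by linarith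
            next
              case False
              then have h5: "R v w \<le> R w v" by simp
              show ?thesis using max_absorb2[OF h0] max_absorb1[OF h1] max_absorb1[OF h2] max_absorb2[OF h3] max_absorb2[OF h4] max_absorb2[OF h5] e4_3 cb[of "R w u" "R u w"] cb[of "R t v" "R v t"] by linarith
            qed
          qed
        qed
      next
        case False
        then have h2: "R t w \<le> R w t" by simp
        show ?thesis
        proof (cases "R v u \<le> R u v")
          case h3: True
          show ?thesis
          proof (cases "R w u \<le> R u w")
            case h4: True
            show ?thesis
            proof (cases "R w v \<le> R v w")
              case h5: True
              show ?thesis using max_absorb2[OF h0] max_absorb1[OF h1] max_absorb2[OF h2] max_absorb1[OF h3] max_absorb1[OF h4] max_absorb1[OF h5] e3_2 cb[of "R u t + R u v + R u w" "R t u + R v u + R w u"] by linarith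
            next
              case False
              then have h5: "R v w \<le> R w v" by simp
              show ?thesis using max_absorb2[OF h0] max_absorb1[OF h1] max_absorb2[OF h2] max_absorb1[OF h3] max_absorb1[OF h4] max_absorb2[OF h5] c7 Phi_ge(3)[where R=R and p=t and s=v and r=w] cb[of "R t v" "R v t"] by linarith
            qed
          next
            case False
            then have h4: "R u w \<le> R w u" by simp
            show ?thesis
            proof (cases "R w v \<le> R v w")
              case h5: True
              show ?thesis using max_absorb2[OF h0] max_absorb1[OF h1] max_absorb2[OF h2] max_absorb1[OF h3] max_absorb2[OF h4] max_absorb1[OF h5] e4_4 cb[of "R v u" "R u v"] cb[of "R t w" "R w t"] by linarith
            next
              case False
              then have h5: "R v w \<le> R w v" by simp
              show ?thesis using max_absorb2[OF h0] max_absorb1[OF h1] max_absorb2[OF h2] max_absorb1[OF h3] max_absorb2[OF h4] max_absorb2[OF h5] c9 Phi_ge(2)[where R=R and p=t and s=u and r=v] cb[of "R t v" "R v t"] by linarith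
            qed
          qed
        next
          case False
          then have h3: "R u v \<le> R v u" by simp
          show ?thesis
          proof (cases "R w u \<le> R u w")
            case h4: True
            show ?thesis
            proof (cases "R w v \<le> R v w")
              case h5: True
              show ?thesis using max_absorb2[OF h0] max_absorb1[OF h1] max_absorb2[OF h2] max_absorb2[OF h3] max_absorb1[OF h4] max_absorb1[OF h5] e4_2 cb[of "R v w" "R w v"] cb[of "R t u" "R u t"] by linarith
            next
              case False
              then have h5: "R v w \<le> R w v" by simp
              show ?thesis using max_absorb2[OF h0] max_absorb1[OF h1] max_absorb2[OF h2] max_absorb2[OF h3] max_absorb1[OF h4] max_absorb2[OF h5] e4_2 cb[of "R v w" "R w v"] cb[of "R t u" "R u t"] by linarith
            qed
          next
            case False
            then have h4: "R u w \<le> R w u" by simp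
            show ?thesis
            proof (cases "R w v \<le> R v w")
              case h5: True
              show ?thesis using max_absorb2[OF h0] max_absorb1[OF h1] max_absorb2[OF h2] max_absorb2[OF h3] max_absorb2[OF h4] max_absorb1[OF h5] e4_4 cb[of "R v u" "R u v"] cb[of "R t w" "R w t"] by linarith
            next
              case False
              then have h5: "R v w \<le> R w v" by simp
              show ?thesis using max_absorb2[OF h0] max_absorb1[OF h1] max_absorb2[OF h2] max_absorb2[OF h3] max_absorb2[OF h4] max_absorb2[OF h5] e3_7 cb[of "R w t + R w v + R w u" "R t w + R v w + R u w"] by linarith
            qed
          qed
        qed
      qed
    next
      case False
      then have h1: "R t v \<le> R v t" by simp
      show ?thesis
      proof (cases "R w t \<le> R t w")
        case h2: True
        show ?thesis
        proof (cases "R v u \<le> R u v")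
          case h3: True
          show ?thesis
          proof (cases "R w u \<le> R u w")
            case h4: True
            show ?thesis
            proof (cases "R w v \<le> R v w")
              case h5: True
              show ?thesis using max_absorb2[OF h0] max_absorb2[OF h1] max_absorb1[OF h2] max_absorb1[OF h3] max_absorb1[OF h4] max_absorb1[OF h5] c7 Phi_ge(2)[where R=R and p=t and s=v and r=w] cb[of "R t w" "R w t"] by linarith
            next
              case False
              then have h5: "R v w \<le> R w v" by simp
              show ?thesis using max_absorb2[OF h0] max_absorb2[OF h1] max_absorb1[OF h2] max_absorb1[OF h3] max_absorb1[OF h4] max_absorb2[OF h5] e3_3 cb[of "R u t + R u w + R u v" "R t u + R w u + R v u"] by linarith
            qed
          next
            case False
            then have h4: "R u w \<le> R w u" by simp
            show ?thesis
            proof (cases "R w v \<le> R v w")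
              case h5: True
              show ?thesis using max_absorb2[OF h0] max_absorb2[OF h1] max_absorb1[OF h2] max_absorb1[OF h3] max_absorb2[OF h4] max_absorb1[OF h5] e4_5 cb[of "R w v" "R v w"] cb[of "R t u" "R u t"] by linarith
            next
              case False
              then have h5: "R v w \<le> R w v" by simp
              show ?thesis using max_absorb2[OF h0] max_absorb2[OF h1] max_absorb1[OF h2] max_absorb1[OF h3] max_absorb2[OF h4] max_absorb2[OF h5] e4_5 cb[of "R w v" "R v w"] cb[of "R t u" "R u t"] by linarith
            qed
          qed
        next
          case False
          then have h3: "R u v \<le> R v u" by simp
          show ?thesis
          proof (cases "R w u \<le> R u w")
            case h4: True
            show ?thesis
            proof (cases "R w v \<le> R v w")
              case h5: True
              show ?thesis using max_absorb2[OF h0] max_absorb2[OF h1] max_absorb1[OF h2] max_absorb2[OF h3] max_absorb1[OF h4] max_absorb1[OF h5] c8 Phi_ge(2)[where R=R and p=t and s=u and r=w] cb[of "R t w" "R w t"] by linarith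
            next
              case False
              then have h5: "R v w \<le> R w v" by simp
              show ?thesis using max_absorb2[OF h0] max_absorb2[OF h1] max_absorb1[OF h2] max_absorb2[OF h3] max_absorb1[OF h4] max_absorb2[OF h5] e4_3 cb[of "R w u" "R u w"] cb[of "R t v" "R v t"] by linarith
            qed
          next
            case False
            then have h4: "R u w \<le> R w u" by simp
            show ?thesis
            proof (cases "R w v \<le> R v w")
              case h5: True
              show ?thesis using max_absorb2[OF h0] max_absorb2[OF h1] max_absorb1[OF h2] max_absorb2[OF h3] max_absorb2[OF h4] max_absorb1[OF h5] e3_5 cb[of "R v t + R v w + R v u" "R t v + R w v + R u v"] by linarith
            next
              case False
              then have h5: "R v w \<le> R w v" by simp
              show ?thesis using max_absorb2[OF h0] max_absorb2[OF h1] max_absorb1[OF h2] max_absorb2[OF h3] max_absorb2[OF h4] max_absorb2[OF h5] e4_3 cb[of "R w u" "R u w"] cb[of "R t v" "R v t"] by linarith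
            qed
          qed
        qed
      next
        case False
        then have h2: "R t w \<le> R w t" by simp
        show ?thesis
        proof (cases "R v u \<le> R u v")
          case h3: True
          show ?thesis
          proof (cases "R w u \<le> R u w")
            case h4: True
            show ?thesis
            proof (cases "R w v \<le> R v w")
              case h5: True
              show ?thesis using max_absorb2[OF h0] max_absorb2[OF h1] max_absorb2[OF h2] max_absorb1[OF h3] max_absorb1[OF h4] max_absorb1[OF h5] c7 Phi_ge(2)[where R=R and p=t and s=v and r=w] cb[of "R t w" "R w t"] by linarith
            next
              case False
              then have h5: "R v w \<le> R w v" by simp
              show ?thesis using max_absorb2[OF h0] max_absorb2[OF h1] max_absorb2[OF h2] max_absorb1[OF h3] max_absorb1[OF h4] max_absorb2[OF h5] c7 Phi_ge(3)[where R=R and p=t and s=v and r=w] cb[of "R t v" "R v t"] by linarith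
            qed
          next
            case False
            then have h4: "R u w \<le> R w u" by simp
            show ?thesis
            proof (cases "R w v \<le> R v w")
              case h5: True
              show ?thesis using max_absorb2[OF h0] max_absorb2[OF h1] max_absorb2[OF h2] max_absorb1[OF h3] max_absorb2[OF h4] max_absorb1[OF h5] e3_0 cb[of "R t u + R t v + R t w" "R u t + R v t + R w t"] by linarith
            next
              case False
              then have h5: "R v w \<le> R w v" by simp
              show ?thesis using max_absorb2[OF h0] max_absorb2[OF h1] max_absorb2[OF h2] max_absorb1[OF h3] max_absorb2[OF h4] max_absorb2[OF h5] c9 Phi_ge(2)[where R=R and p=t and s=u and r=v] cb[of "R t v" "R v t"] by linarith
            qed
          qed
        next
          case False
          then have h3: "R u v \<le> R v u" by simp
          show ?thesis
          proof (cases "R w u \<le> R u w")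
            case h4: True
            show ?thesis
            proof (cases "R w v \<le> R v w")
              case h5: True
              show ?thesis using max_absorb2[OF h0] max_absorb2[OF h1] max_absorb2[OF h2] max_absorb2[OF h3] max_absorb1[OF h4] max_absorb1[OF h5] c8 Phi_ge(2)[where R=R and p=t and s=u and r=w] cb[of "R t w" "R w t"] by linarith
            next
              case False
              then have h5: "R v w \<le> R w v" by simp
              show ?thesis using max_absorb2[OF h0] max_absorb2[OF h1] max_absorb2[OF h2] max_absorb2[OF h3] max_absorb1[OF h4] max_absorb2[OF h5] e3_1 cb[of "R t u + R t w + R t v" "R u t + R w t + R v t"] by linarith
            qed
          next
            case False
            then have h4: "R u w \<le> R w u" by simp
            show ?thesis
            proof (cases "R w v \<le> R v w")
              case h5: True
              show ?thesis using max_absorb2[OF h0] max_absorb2[OF h1] max_absorb2[OF h2] max_absorb2[OF h3] max_absorb2[OF h4] max_absorb1[OF h5] c8 Phi_ge(3)[where R=R and p=t and s=u and r=w] cb[of "R t u" "R u t"] by linarith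
            next
              case False
              then have h5: "R v w \<le> R w v" by simp
              show ?thesis using max_absorb2[OF h0] max_absorb2[OF h1] max_absorb2[OF h2] max_absorb2[OF h3] max_absorb2[OF h4] max_absorb2[OF h5] c9 Phi_ge(3)[where R=R and p=t and s=u and r=v] cb[of "R t u" "R u t"] by linarith
            qed
          qed
        qed
      qed
    qed
  qed
qed

lemma Psi_Phi: "Psi R p s r = Phi (\<lambda>i j. R j i) p s r"
  by (simp add: Psi_def Phi_def max.commute)

lemma rank4_vals:
  assumes "t \<noteq> u" "t \<noteq> v" "t \<noteq> w" "u \<noteq> v" "u \<noteq> w" "v \<noteq> w"
  shows "rank4 t u v w w = 0" "rank4 t u v w v = 1" "rank4 t u v w u = 2" "rank4 t u v w t = 3"
  using assms by (auto simp: rank4_def)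

lemma deadline_gen:
  fixes R :: "nat \<Rightarrow> nat \<Rightarrow> nat" and H :: "nat \<Rightarrow> nat \<Rightarrow> nat" and f :: "nat\<times>nat\<times>nat \<Rightarrow> nat"
    and M :: "nat \<Rightarrow> nat" and D :: "nat \<Rightarrow> nat \<Rightarrow> nat"
  assumes bij: "bij_betw f (EQ R) {0..<card (EQ R)}"
    and mono: "\<forall>e\<in>EQ R. \<forall>e'\<in>EQ R. key R H e < key R H e' \<longrightarrow> f e < f e'"
    and cnt: "\<And>r. r \<le> 3 \<Longrightarrow> card {e\<in>EQ R. key R H e \<le> r} \<le> M r"
    and Mmono: "\<And>x r. x \<in> Bits R \<Longrightarrow> r \<le> H (src x) (dst x) \<Longrightarrow> M r \<le> D (src x) (dst x)"
    and H3: "\<And>x. x \<in> Bits R \<Longrightarrow> H (src x) (dst x) \<le> 3"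
  shows "\<forall>x\<in>Bits R. f (eqof x) < D (src x) (dst x)"
proof
  fix x assume x: "x \<in> Bits R"
  have eE: "eqof x \<in> EQ R" using x eqof_Bits by blast
  have k: "key R H (eqof x) \<le> H (src x) (dst x)" using key_le_bit[OF x] .
  have "f (eqof x) < card {e'\<in>EQ R. key R H e' \<le> key R H (eqof x)}"
    by (rule rank_deadline[OF finite_EQ bij mono eE])
  also have "\<dots> \<le> M (key R H (eqof x))" using cnt k H3[OF x] by simp
  also have "\<dots> \<le> D (src x) (dst x)" using Mmono[OF x k] .
  finally show "f (eqof x) < D (src x) (dst x)" .
qed

theorem lemma1:
  fixes q :: nat and nup ndn :: "nat \<Rightarrow> nat" and R :: "nat \<Rightarrow> nat \<Rightarrow> nat"
    and t u v w a b c d :: nat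
  assumes q_ge: "\<forall>i\<in>Users. nup i \<le> q \<and> ndn i \<le> q"
    and up_perm: "{t, u, v, w} = {1, 2, 3, 4}"
    and dn_perm: "{a, b, c, d} = {1, 2, 3, 4}"
    and up_ord: "nup t \<ge> nup u" "nup u \<ge> nup v" "nup v \<ge> nup w"
    and dn_ord: "ndn a \<ge> ndn b" "ndn b \<ge> ndn c" "ndn c \<ge> ndn d"
    and c1: "R w t + R w u + R w v \<le> nup w"
    and c2: "R a d + R b d + R c d \<le> ndn d"
    and c3: "R w t + R w u + R v t + R v u + max (R v w) (R w v) \<le> nup v"
    and c4: "R a d + R b d + R a c + R b c + max (R c d) (R d c) \<le> ndn c"
    and c5: "R u t + R v t + R w t + Phi R u v w \<le> nup u"
    and c6: "R t u + R t v + R t w + Phi R u v w \<le> nup t"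
    and c7: "R u t + R u v + R u w + Phi R t v w \<le> nup t"
    and c8: "R v t + R v u + R v w + Phi R t u w \<le> nup t"
    and c9: "R w t + R w u + R w v + Phi R t u v \<le> nup t"
    and c10: "R a b + R a c + R a d + Psi R b c d \<le> ndn b"
    and c11: "R b a + R c a + R d a + Psi R b c d \<le> ndn a"
    and c12: "R a b + R c b + R d b + Psi R a c d \<le> ndn a"
    and c13: "R a c + R b c + R d c + Psi R a b d \<le> ndn a"
    and c14: "R a d + R b d + R c d + Psi R a b c \<le> ndn a"
    and E1: "max (R w u + R u v + R v w) (R u w + R w v + R v u) + R w t + R u t + R v t \<le> nup u"
    and E2: "max (R b c + R c d + R d b) (R c b + R b d + R d c) + R a b + R a c + R a d \<le> ndn b"
    and E3: "\<forall>i j k l. {i, j, k, l} = {1, 2, 3, 4} \<longrightarrow>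
               R i j + R j k + R k i + max (R l i + R l j + R l k) (R i l + R j l + R k l)
                 \<le> min (nup t) (ndn a)"
    and E4: "\<forall>i j k l. {i, j, k, l} = {1, 2, 3, 4} \<longrightarrow>
               R i j + R j k + R k l + R l i + max (R j l) (R l j) + max (R i k) (R k i)
                 \<le> min (nup t) (ndn a)"
  shows "SOS_achieves q nup ndn R t u v w a b c d"
proof -
  note pu = perm4[OF up_perm] and pd = perm4[OF dn_perm]
  have du_ne: "t \<noteq> u" "t \<noteq> v" "t \<noteq> w" "u \<noteq> v" "u \<noteq> w" "v \<noteq> w" using pu by auto
  have dd_ne: "a \<noteq> b" "a \<noteq> c" "a \<noteq> d" "b \<noteq> c" "b \<noteq> d" "c \<noteq> d" using pd by auto
  note ur = rank4_vals[OF du_ne] and dr = rank4_vals[OF dd_ne]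
  have UU: "Users = {t,u,v,w}" using up_perm by (simp add: Users_def)
  have UD: "Users = {a,b,c,d}" using dn_perm by (simp add: Users_def)
  obtain fu where bu: "bij_betw fu (EQ R) {0..<card (EQ R)}"
    and mu: "\<forall>e\<in>EQ R. \<forall>e'\<in>EQ R. key R (\<lambda>i j. rank4 t u v w i) e < key R (\<lambda>i j. rank4 t u v w i) e' \<longrightarrow> fu e < fu e'"
    using rank_bij[OF finite_EQ, of R "key R (\<lambda>i j. rank4 t u v w i)"] by blast
  obtain fd where bd: "bij_betw fd (EQ R) {0..<card (EQ R)}"
    and md: "\<forall>e\<in>EQ R. \<forall>e'\<in>EQ R. key R (\<lambda>i j. rank4 a b c d j) e < key R (\<lambda>i j. rank4 a b c d j) e' \<longrightarrow> fd e < fd e'"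
    using rank_bij[OF finite_EQ, of R "key R (\<lambda>i j. rank4 a b c d j)"] by blast
  define Mu where "Mu r = (if r = 0 then nup w else if r = 1 then nup v else if r = 2 then nup u else nup t)" for r :: nat
  define Md where "Md r = (if r = 0 then ndn d else if r = 1 then ndn c else if r = 2 then ndn b else ndn a)" for r :: nat
  have E3u: "\<forall>i j k l. {i, j, k, l} = {t,u,v,w} \<longrightarrow>
               R i j + R j k + R k i + max (R l i + R l j + R l k) (R i l + R j l + R k l) \<le> nup t"
    using E3 up_perm by (metis (no_types, lifting) min.bounded_iff)
  have E4u: "\<forall>i j k l. {i, j, k, l} = {t,u,v,w} \<longrightarrow>
               R i j + R j k + R k l + R l i + max (R j l) (R l j) + max (R i k) (R k i) \<le> nup t"
    using E4 up_perm by (metis (no_types, lifting) min.bounded_iff)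
  have cu: "card {e\<in>EQ R. key R (\<lambda>i j. rank4 t u v w i) e \<le> r} \<le> Mu r" if "r \<le> 3" for r
  proof -
    note ck = count_key[OF up_perm, where H="\<lambda>i j. rank4 t u v w i" and r=r and R=R]
    have "r = 0 \<or> r = 1 \<or> r = 2 \<or> r = 3" using that by arith
    then show ?thesis
    proof (elim disjE)
      assume r: "r = 0"
      show ?thesis using ck c1 unfolding r Mu_def by (simp add: ur)
    next
      assume r: "r = 1"
      show ?thesis using ck c3 unfolding r Mu_def by (simp add: ur)
    next
      assume r: "r = 2"
      have "R u t + R v t + R w t + (max (R u v) (R v u) + max (R u w) (R w u) + max (R v w) (R w v)) \<le> nup u"
        by (rule tri_bound[OF c5]) (use E1 in linarith)
      then show ?thesis using ck unfolding r Mu_def by (simp add: ur)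
    next
      assume r: "r = 3"
      have "max (R t u) (R u t) + max (R t v) (R v t) + max (R t w) (R w t) + max (R u v) (R v u)
         + max (R u w) (R w u) + max (R v w) (R w v) \<le> nup t"
        by (rule tour_bound[OF c6 c7 c8 c9 E3u E4u])
      then show ?thesis using ck unfolding r Mu_def by (simp add: ur)
    qed
  qed
  define RT where "RT = (\<lambda>i j. R j i)"
  have E3d: "\<forall>i j k l. {i, j, k, l} = {a,b,c,d} \<longrightarrow>
               RT i j + RT j k + RT k i + max (RT l i + RT l j + RT l k) (RT i l + RT j l + RT k l) \<le> ndn a"
  proof (intro allI impI)
    fix i j k l assume h: "{i, j, k, l} = {a,b,c,d}"
    then have "{i, k, j, l} = {1,2,3,4}" using dn_perm by (simp add: insert_commute)
    then have "R i k + R k j + R j i + max (R l i + R l k + R l j) (R i l + R k l + R j l) \<le> min (nup t) (ndn a)"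
      using E3 by blast
    then show "RT i j + RT j k + RT k i + max (RT l i + RT l j + RT l k) (RT i l + RT j l + RT k l) \<le> ndn a"
      unfolding RT_def by (simp add: ac_simps max.commute)
  qed
  have E4d: "\<forall>i j k l. {i, j, k, l} = {a,b,c,d} \<longrightarrow>
               RT i j + RT j k + RT k l + RT l i + max (RT j l) (RT l j) + max (RT i k) (RT k i) \<le> ndn a"
  proof (intro allI impI)
    fix i j k l assume h: "{i, j, k, l} = {a,b,c,d}"
    then have "{i, l, k, j} = {1,2,3,4}" using dn_perm by (simp add: insert_commute)
    then have "R i l + R l k + R k j + R j i + max (R l j) (R j l) + max (R i k) (R k i) \<le> min (nup t) (ndn a)"
      using E4 by blast
    then show "RT i j + RT j k + RT k l + RT l i + max (RT j l) (RT l j) + max (RT i k) (RT k i) \<le> ndn a"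
      unfolding RT_def by (simp add: ac_simps max.commute)
  qed
  have cd: "card {e\<in>EQ R. key R (\<lambda>i j. rank4 a b c d j) e \<le> r} \<le> Md r" if "r \<le> 3" for r
  proof -
    note ck = count_key[OF dn_perm, where H="\<lambda>i j. rank4 a b c d j" and r=r and R=R]
    have "r = 0 \<or> r = 1 \<or> r = 2 \<or> r = 3" using that by arith
    then show ?thesis
    proof (elim disjE)
      assume r: "r = 0"
      show ?thesis using ck c2 unfolding r Md_def by (simp add: dr)
    next
      assume r: "r = 1"
      show ?thesis using ck c4 unfolding r Md_def by (simp add: dr max.commute)
    next
      assume r: "r = 2"
      have h1: "R a b + R a c + R a d + Phi RT b c d \<le> ndn b" using c10 unfolding RT_def Psi_Phi .
      have h2: "max (RT d b + RT b c + RT c d) (RT b d + RT d c + RT c b) + (R a b + R a c + R a d) \<le> ndn b"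
        using E2 unfolding RT_def by (simp add: ac_simps max.commute)
      have "R a b + R a c + R a d + (max (RT b c) (RT c b) + max (RT b d) (RT d b) + max (RT c d) (RT d c)) \<le> ndn b"
        by (rule tri_bound[OF h1 h2])
      then show ?thesis using ck unfolding r Md_def RT_def by (simp add: dr max.commute)
    next
      assume r: "r = 3"
      have h6: "RT a b + RT a c + RT a d + Phi RT b c d \<le> ndn a" using c11 unfolding RT_def Psi_Phi .
      have h7: "RT b a + RT b c + RT b d + Phi RT a c d \<le> ndn a" using c12 unfolding RT_def Psi_Phi .
      have h8: "RT c a + RT c b + RT c d + Phi RT a b d \<le> ndn a" using c13 unfolding RT_def Psi_Phi .
      have h9: "RT d a + RT d b + RT d c + Phi RT a b c \<le> ndn a" using c14 unfolding RT_def Psi_Phi .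
      have "max (RT a b) (RT b a) + max (RT a c) (RT c a) + max (RT a d) (RT d a) + max (RT b c) (RT c b)
         + max (RT b d) (RT d b) + max (RT c d) (RT d c) \<le> ndn a"
        by (rule tour_bound[OF h6 h7 h8 h9 E3d E4d])
      then show ?thesis using ck unfolding r Md_def RT_def by (simp add: dr max.commute)
    qed
  qed
  have dlu: "\<forall>x\<in>Bits R. fu (eqof x) < (\<lambda>i j. nup i) (src x) (dst x)"
  proof (rule deadline_gen[OF bu mu cu])
    fix x r assume x: "x \<in> Bits R" and r: "r \<le> rank4 t u v w (src x)"
    have "src x \<in> {t,u,v,w}" using bitsD(1)[OF x] UU by simp
    then have "src x = t \<or> src x = u \<or> src x = v \<or> src x = w" by simp
    then show "Mu r \<le> nup (src x)"
    proof (elim disjE)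
      assume s: "src x = t" show ?thesis using r up_ord unfolding Mu_def s by (simp add: ur)
    next
      assume s: "src x = u" show ?thesis using r up_ord unfolding Mu_def s by (simp add: ur)
    next
      assume s: "src x = v" show ?thesis using r up_ord unfolding Mu_def s by (simp add: ur)
    next
      assume s: "src x = w" show ?thesis using r up_ord unfolding Mu_def s by (simp add: ur)
    qed
  next
    fix x assume x: "x \<in> Bits R"
    have "src x \<in> {t,u,v,w}" using bitsD(1)[OF x] UU by simp
    show "rank4 t u v w (src x) \<le> 3" by (simp add: rank4_def)
  qed
  have dld: "\<forall>x\<in>Bits R. fd (eqof x) < (\<lambda>i j. ndn j) (src x) (dst x)"
  proof (rule deadline_gen[OF bd md cd])
    fix x r assume x: "x \<in> Bits R" and r: "r \<le> rank4 a b c d (dst x)"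
    have "dst x \<in> {a,b,c,d}" using bitsD(2)[OF x] UD by simp
    then have "dst x = a \<or> dst x = b \<or> dst x = c \<or> dst x = d" by simp
    then show "Md r \<le> ndn (dst x)"
    proof (elim disjE)
      assume s: "dst x = a" show ?thesis using r dn_ord unfolding Md_def s by (simp add: dr)
    next
      assume s: "dst x = b" show ?thesis using r dn_ord unfolding Md_def s by (simp add: dr)
    next
      assume s: "dst x = c" show ?thesis using r dn_ord unfolding Md_def s by (simp add: dr)
    next
      assume s: "dst x = d" show ?thesis using r dn_ord unfolding Md_def s by (simp add: dr)
    qed
  next
    fix x assume x: "x \<in> Bits R"
    have "dst x \<in> {a,b,c,d}" using bitsD(2)[OF x] UD by simp
    show "rank4 a b c d (dst x) \<le> 3" by (simp add: rank4_def)
  qed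
  show ?thesis unfolding SOS_achieves_def
    using sos_from_orders[OF q_ge bu mu bd md] dlu dld by simp
qed


end
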